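(* Let $P$ be a program and $SQ$ a stack-queue scheduling rule. Let $A,B,C,D$ be p-goals and $\underline{\pi}$ a shifting such that both $A|B|C|D$ and $A|B|C|B\underline{\pi}|D$ are defined (concatenations). If there is a p-SLD derivation $A|B|C|D\xrightarrow{SQ,X.P}Q$, then there exist a template $Y$ and a p-SLD derivation $A|B|C|B\underline{\pi}|D\xrightarrow{SQ,Y.P}R$ with $X\subseteq_L Y$ and $\#Q\le\#R$.
   Context: A p-atom is a pair $a[p]$ of an atom $a$ and a rational priority $p$. A p-goal is a finite set of p-atoms with pairwise distinct priorities, regarded as a list ordered by increasing priority; $\#G$ is its number of p-atoms. Substitutions act on atoms and leave priorities unchanged. A clause is $h\leftarrow B$ with $h$ an atom and $B$ a p-goal; a program is a finite set of clauses. For p-goals with no common priority, $F+G=F\cup G$; $F|G$ denotes $F+G$ when all priorities of $F$ are smaller than those of $G$. A shifting $\underline{\pi}$ is a strictly increasing bijection $\mathbb{Q}\to\mathbb{Q}$; $G\underline\pi$ replaces each priority $p$ by $\underline\pi(p)$. Priority derivation step: for a p-goal $a|F$ ($a$ of least priority), clause $c=(h\leftarrow B)$, renaming $\xi$ with $var(a|F)\cap var(c\xi)=\emptyset$, idempotent relevant mgu $\theta$ of $a$ and $h\xi$, shifting $\underline{\pi}$ with $F$, $B\xi\underline{\pi}$ sharing no priority: $a|F\xrightarrow{c\xi,\theta}(F+B\xi\underline{\pi})\theta$. A p-SLD derivation is a sequence of such steps with each renamed clause $c_j\xi_j$ variable-disjoint from the initial goal and all earlier renamed clauses; its template is the sequence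 of applied clauses. For templates, $X\subseteq_L Y$ means $X$ is a subsequence of $Y$. $G\xrightarrow{S,M.P}R$ denotes a p-SLD derivation with template $M$, all clauses in $P$, all steps in $S$. Lowering: for $c=(h\leftarrow B)$, a step $a\lambda\underline{\sigma}|(K\lambda\underline{\sigma}+X)\xrightarrow{c}(X+K\lambda\underline{\sigma}+B\xi''\underline{\theta}'')\alpha''$ is a lowering by $X$ of $a|K\xrightarrow{c}(K+B\xi'\underline{\theta}')\alpha'$; a congruent lowering if some shifting $\underline{\rho}$ has $K\underline{\rho}=K\underline{\sigma}$ and $B\underline{\theta}'\underline{\rho}=B\underline{\theta}''$. Steps are congruent lowerings of each other if each is a congruent lowering of the other. A set $S$ of steps is complete if (i) whenever some step $G\xrightarrow{c}\cdot$ exists, some step $G\xrightarrow{c}\cdot$ lies in $S$, and (ii) $S$ contains every step that is a congruent lowering of each other with a step of $S$. Stack-queue scheduling rule: a complete set $SQ$ of priority derivation steps such that for every clause $c=(h\leftarrow B)$ there are p-goals $M_s,M_q$ with $B=M_s|M_q$ such that every step $a|K\xrightarrow{c\xi,\mu}R$ in $SQ$ satisfies $R=(M_s\xi\underline{\gamma}|K|M_q\xi\underline{\gamma})\mu$ for some shifting $\underline{\gamma}$. *)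

theory Defs
  imports Complex_Main "HOL-Library.Sublist"
begin

datatype ('f,'v) trm = Var 'v | Fn 'f "('f,'v) trm list"

datatype ('f,'v) atom = Atom 'f "('f,'v) trm list"

type_synonym ('f,'v) subst = "'v \<Rightarrow> ('f,'v) trm"

fun subst_trm :: "('f,'v) subst \<Rightarrow> ('f,'v) trm \<Rightarrow> ('f,'v) trm" where
  "subst_trm \<sigma> (Var x) = \<sigma> x"
| "subst_trm \<sigma> (Fn f ts) = Fn f (map (subst_trm \<sigma>) ts)"

fun subst_atom :: "('f,'v) subst \<Rightarrow> ('f,'v) atom \<Rightarrow> ('f,'v) atom" where
  "subst_atom \<sigma> (Atom f ts) = Atom f (map (subst_trm \<sigma>) ts)"

fun vars_trm :: "('f,'v) trm \<Rightarrow> 'v set" where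
  "vars_trm (Var x) = {x}"
| "vars_trm (Fn f ts) = (\<Union>t\<in>set ts. vars_trm t)"

fun vars_atom :: "('f,'v) atom \<Rightarrow> 'v set" where
  "vars_atom (Atom f ts) = (\<Union>t\<in>set ts. vars_trm t)"

definition subst_comp :: "('f,'v) subst \<Rightarrow> ('f,'v) subst \<Rightarrow> ('f,'v) subst" where
  "subst_comp \<sigma> \<tau> = (\<lambda>x. subst_trm \<tau> (\<sigma> x))"

definition subst_dom :: "('f,'v) subst \<Rightarrow> 'v set" where
  "subst_dom \<sigma> = {x. \<sigma> x \<noteq> Var x}"

definition subst_vars :: "('f,'v) subst \<Rightarrow> 'v set" where
  "subst_vars \<sigma> = subst_dom \<sigma> \<union> (\<Union>x\<in>subst_dom \<sigma>. vars_trm (\<sigma> x))"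

definition renaming :: "('f,'v) subst \<Rightarrow> bool" where
  "renaming \<xi> \<longleftrightarrow> (\<exists>f. bij f \<and> \<xi> = (\<lambda>x. Var (f x)))"

definition is_mgu :: "('f,'v) subst \<Rightarrow> ('f,'v) atom \<Rightarrow> ('f,'v) atom \<Rightarrow> bool" where
  "is_mgu \<theta> a b \<longleftrightarrow> subst_atom \<theta> a = subst_atom \<theta> b \<and>
     (\<forall>\<tau>. subst_atom \<tau> a = subst_atom \<tau> b \<longrightarrow> (\<exists>\<delta>. \<tau> = subst_comp \<theta> \<delta>))"

definition idem_relevant_mgu :: "('f,'v) subst \<Rightarrow> ('f,'v) atom \<Rightarrow> ('f,'v) atom \<Rightarrow> bool" where
  "idem_relevant_mgu \<theta> a b \<longleftrightarrow> is_mgu \<theta> a b \<and> subst_comp \<theta> \<theta> = \<theta> \<and>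
     subst_vars \<theta> \<subseteq> vars_atom a \<union> vars_atom b"

type_synonym ('f,'v) pgoal = "(('f,'v) atom \<times> rat) set"
type_synonym ('f,'v) clause = "('f,'v) atom \<times> ('f,'v) pgoal"

definition prios :: "('f,'v) pgoal \<Rightarrow> rat set" where
  "prios G = snd ` G"

definition pgoal :: "('f,'v) pgoal \<Rightarrow> bool" where
  "pgoal G \<longleftrightarrow> finite G \<and> inj_on snd G"

definition pgoal_vars :: "('f,'v) pgoal \<Rightarrow> 'v set" where
  "pgoal_vars G = (\<Union>x\<in>G. vars_atom (fst x))"

definition psubst :: "('f,'v) subst \<Rightarrow> ('f,'v) pgoal \<Rightarrow> ('f,'v) pgoal" where
  "psubst \<sigma> G = (\<lambda>(a,p). (subst_atom \<sigma> a, p)) ` G"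

definition shifting :: "(rat \<Rightarrow> rat) \<Rightarrow> bool" where
  "shifting \<pi> \<longleftrightarrow> strict_mono \<pi> \<and> bij \<pi>"

definition shift :: "(rat \<Rightarrow> rat) \<Rightarrow> ('f,'v) pgoal \<Rightarrow> ('f,'v) pgoal" where
  "shift \<pi> G = (\<lambda>(a,p). (a, \<pi> p)) ` G"

text \<open>The concatenation \<open>G1|G2|...|Gn\<close> is defined: all are p-goals and every priority
  of an earlier component is smaller than every priority of a later one.\<close>
definition prio_less :: "('f,'v) pgoal \<Rightarrow> ('f,'v) pgoal \<Rightarrow> bool" where
  "prio_less F G \<longleftrightarrow> (\<forall>p\<in>prios F. \<forall>q\<in>prios G. p < q)"

definition pcat_ok :: "('f,'v) pgoal list \<Rightarrow> bool" where
  "pcat_ok Gs \<longleftrightarrow> (\<forall>G\<in>set Gs. pgoal G) \<and> sorted_wrt prio_less Gs"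

definition is_clause :: "('f,'v) clause \<Rightarrow> bool" where
  "is_clause c \<longleftrightarrow> pgoal (snd c)"

definition program :: "('f,'v) clause set \<Rightarrow> bool" where
  "program P \<longleftrightarrow> finite P \<and> (\<forall>c\<in>P. is_clause c)"

definition rename_clause :: "('f,'v) subst \<Rightarrow> ('f,'v) clause \<Rightarrow> ('f,'v) clause" where
  "rename_clause \<xi> c = (subst_atom \<xi> (fst c), psubst \<xi> (snd c))"

definition clause_vars :: "('f,'v) clause \<Rightarrow> 'v set" where
  "clause_vars c = vars_atom (fst c) \<union> pgoal_vars (snd c)"

text \<open>A step \<open>G --c\<xi>,\<theta>--> R\<close> is recorded as the tuple \<open>(G, c, \<xi>, \<theta>, R)\<close>.\<close>
type_synonym ('f,'v) step =
  "('f,'v) pgoal \<times> ('f,'v) clause \<times> ('f,'v) subst \<times> ('f,'v) subst \<times> ('f,'v) pgoal"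

definition is_step :: "('f,'v) step \<Rightarrow> bool" where
  "is_step s \<longleftrightarrow> (case s of (G, (h, B), \<xi>, \<theta>, R) \<Rightarrow>
     pgoal G \<and> is_clause (h, B) \<and> renaming \<xi> \<and>
     (\<exists>a p F. G = insert (a, p) F \<and> (a, p) \<notin> F \<and> (\<forall>q\<in>prios F. p < q) \<and>
        pgoal_vars G \<inter> clause_vars (rename_clause \<xi> (h, B)) = {} \<and>
        idem_relevant_mgu \<theta> a (subst_atom \<xi> h) \<and>
        (\<exists>\<pi>. shifting \<pi> \<and> prios F \<inter> prios (shift \<pi> (psubst \<xi> B)) = {} \<and>
             R = psubst \<theta> (F \<union> shift \<pi> (psubst \<xi> B)))))"

definition step_goal :: "('f,'v) step \<Rightarrow> ('f,'v) pgoal" where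
  "step_goal s = fst s"
definition step_clause :: "('f,'v) step \<Rightarrow> ('f,'v) clause" where
  "step_clause s = fst (snd s)"
definition step_ren :: "('f,'v) step \<Rightarrow> ('f,'v) subst" where
  "step_ren s = fst (snd (snd s))"
definition step_res :: "('f,'v) step \<Rightarrow> ('f,'v) pgoal" where
  "step_res s = snd (snd (snd (snd s)))"

text \<open>\<open>cong_lowering s2 s1\<close>: step s2 is a congruent lowering (by some X) of step s1.\<close>
definition cong_lowering :: "('f,'v) step \<Rightarrow> ('f,'v) step \<Rightarrow> bool" where
  "cong_lowering s2 s1 \<longleftrightarrow>
    (\<exists>G1 h B \<xi>1 \<alpha>1 R1 G2 \<xi>2 \<alpha>2 R2 a p K X lam \<sigma> \<theta>1 \<theta>2 \<rho>.
       s1 = (G1, (h, B), \<xi>1, \<alpha>1, R1) \<and> s2 = (G2, (h, B), \<xi>2, \<alpha>2, R2) \<and>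
       is_step s1 \<and> is_step s2 \<and>
       G1 = insert (a, p) K \<and> (a, p) \<notin> K \<and> (\<forall>q\<in>prios K. p < q) \<and>
       shifting \<theta>1 \<and> R1 = psubst \<alpha>1 (K \<union> shift \<theta>1 (psubst \<xi>1 B)) \<and>
       shifting \<sigma> \<and>
       prios (shift \<sigma> (psubst lam K)) \<inter> prios X = {} \<and>
       (\<forall>q\<in>prios (shift \<sigma> (psubst lam K) \<union> X). \<sigma> p < q) \<and>
       G2 = insert (subst_atom lam a, \<sigma> p) (shift \<sigma> (psubst lam K) \<union> X) \<and>
       shifting \<theta>2 \<and>
       R2 = psubst \<alpha>2 (X \<union> shift \<sigma> (psubst lam K) \<union> shift \<theta>2 (psubst \<xi>2 B)) \<and>
       shifting \<rho> \<and> shift \<rho> K = shift \<sigma> K \<and> shift \<rho> (shift \<theta>1 B) = shift \<theta>2 B)"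

definition complete_steps :: "('f,'v) step set \<Rightarrow> bool" where
  "complete_steps S \<longleftrightarrow> (\<forall>s\<in>S. is_step s) \<and>
     (\<forall>G c. (\<exists>\<xi> \<theta> R. is_step (G, c, \<xi>, \<theta>, R)) \<longrightarrow> (\<exists>\<xi> \<theta> R. (G, c, \<xi>, \<theta>, R) \<in> S)) \<and>
     (\<forall>s\<in>S. \<forall>s'. cong_lowering s' s \<and> cong_lowering s s' \<longrightarrow> s' \<in> S)"

definition stack_queue :: "('f,'v) step set \<Rightarrow> bool" where
  "stack_queue SQ \<longleftrightarrow> complete_steps SQ \<and>
     (\<forall>h B. is_clause (h, B) \<longrightarrow>
        (\<exists>Ms Mq. pcat_ok [Ms, Mq] \<and> B = Ms \<union> Mq \<and>
           (\<forall>G \<xi> \<mu> R. (G, (h, B), \<xi>, \<mu>, R) \<in> SQ \<longrightarrow>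
              (\<exists>a p K \<gamma>. G = insert (a, p) K \<and> (a, p) \<notin> K \<and> (\<forall>q\<in>prios K. p < q) \<and>
                 shifting \<gamma> \<and>
                 pcat_ok [shift \<gamma> (psubst \<xi> Ms), K, shift \<gamma> (psubst \<xi> Mq)] \<and>
                 R = psubst \<mu> (shift \<gamma> (psubst \<xi> Ms) \<union> K \<union> shift \<gamma> (psubst \<xi> Mq))))))"

text \<open>\<open>pderiv_aux S P used G ss R\<close>: the list of steps ss is a derivation from G to R,
  all steps in S, all clauses in P, each renamed clause variable-disjoint from the
  variables in \<open>used\<close> (initial goal and earlier renamed clauses).\<close>
fun pderiv_aux :: "('f,'v) step set \<Rightarrow> ('f,'v) clause set \<Rightarrow> 'v set \<Rightarrow>
    ('f,'v) pgoal \<Rightarrow> ('f,'v) step list \<Rightarrow> ('f,'v) pgoal \<Rightarrow> bool" where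
  "pderiv_aux S P used G [] R \<longleftrightarrow> R = G"
| "pderiv_aux S P used G (s # ss) R \<longleftrightarrow>
     s \<in> S \<and> is_step s \<and> step_goal s = G \<and> step_clause s \<in> P \<and>
     clause_vars (rename_clause (step_ren s) (step_clause s)) \<inter> used = {} \<and>
     pderiv_aux S P (used \<union> clause_vars (rename_clause (step_ren s) (step_clause s)))
       (step_res s) ss R"

text \<open>\<open>pderiv S P G ss R\<close>: \<open>G --(S, M.P)--> R\<close> with template \<open>M = template ss\<close>.\<close>
definition pderiv :: "('f,'v) step set \<Rightarrow> ('f,'v) clause set \<Rightarrow>
    ('f,'v) pgoal \<Rightarrow> ('f,'v) step list \<Rightarrow> ('f,'v) pgoal \<Rightarrow> bool" where
  "pderiv S P G ss R \<longleftrightarrow> pderiv_aux S P (pgoal_vars G) G ss R"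

definition template :: "('f,'v) step list \<Rightarrow> ('f,'v) clause list" where
  "template ss = map step_clause ss"

end

theory Submission
  imports Defs
begin


lemma subst_trm_comp[simp]: "subst_trm (subst_comp \<sigma> \<tau>) t = subst_trm \<tau> (subst_trm \<sigma> t)"
  by (induction t) (auto simp: subst_comp_def)

lemma subst_atom_comp[simp]: "subst_atom (subst_comp \<sigma> \<tau>) a = subst_atom \<tau> (subst_atom \<sigma> a)"
  by (cases a) auto

lemma subst_trm_Var[simp]: "subst_trm Var t = t"
  by (induction t) (auto simp: map_idI)

lemma subst_atom_Var[simp]: "subst_atom Var a = a"
  by (cases a) (auto intro: map_idI)

lemma subst_comp_assoc: "subst_comp (subst_comp \<sigma> \<tau>) \<rho> = subst_comp \<sigma> (subst_comp \<tau> \<rho>)"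
  by (rule ext) (simp add: subst_comp_def subst_trm_comp[unfolded subst_comp_def])

lemma subst_comp_Var_left[simp]: "subst_comp Var \<tau> = \<tau>"
  by (auto simp: subst_comp_def)

lemma subst_trm_cong: "(\<And>x. x \<in> vars_trm t \<Longrightarrow> \<sigma> x = \<tau> x) \<Longrightarrow> subst_trm \<sigma> t = subst_trm \<tau> t"
  by (induction t) auto

lemma subst_atom_cong: "(\<And>x. x \<in> vars_atom a \<Longrightarrow> \<sigma> x = \<tau> x) \<Longrightarrow> subst_atom \<sigma> a = subst_atom \<tau> a"
  by (cases a) (auto intro: subst_trm_cong)

lemma subst_trm_eqD: "subst_trm \<sigma> t = subst_trm \<tau> t \<Longrightarrow> x \<in> vars_trm t \<Longrightarrow> \<sigma> x = \<tau> x"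
proof (induction t)
  case (Var y) then show ?case by simp
next
  case (Fn f ts)
  then obtain u where u: "u \<in> set ts" "x \<in> vars_trm u" by auto
  from Fn.prems(1) have "map (subst_trm \<sigma>) ts = map (subst_trm \<tau>) ts" by simp
  with u have "subst_trm \<sigma> u = subst_trm \<tau> u" by (simp add: map_eq_conv)
  with Fn.IH u show ?case by blast
qed

lemma subst_atom_eqD: "subst_atom \<sigma> a = subst_atom \<tau> a \<Longrightarrow> x \<in> vars_atom a \<Longrightarrow> \<sigma> x = \<tau> x"
proof (cases a)
  case (Atom f ts)
  assume h: "subst_atom \<sigma> a = subst_atom \<tau> a" "x \<in> vars_atom a"
  then obtain u where u: "u \<in> set ts" "x \<in> vars_trm u" using Atom by auto
  from h Atom have "map (subst_trm \<sigma>) ts = map (subst_trm \<tau>) ts" by simp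
  with u have e: "subst_trm \<sigma> u = subst_trm \<tau> u" by (simp add: map_eq_conv)
  show ?thesis by (rule subst_trm_eqD[OF e u(2)])
qed

lemma finite_vars_trm[simp]: "finite (vars_trm t)"
  by (induction t) auto

lemma finite_vars_atom[simp]: "finite (vars_atom a)"
  by (cases a) auto

lemma vars_subst_trm: "vars_trm (subst_trm \<sigma> t) = (\<Union>x\<in>vars_trm t. vars_trm (\<sigma> x))"
  by (induction t) auto

lemma vars_subst_atom: "vars_atom (subst_atom \<sigma> a) = (\<Union>x\<in>vars_atom a. vars_trm (\<sigma> x))"
  by (cases a) (auto simp: vars_subst_trm)

lemma vars_subst_sub: "x \<in> vars_trm (\<sigma> y) \<Longrightarrow> x \<in> {y} \<union> subst_vars \<sigma>"
  by (cases "\<sigma> y = Var y") (auto simp: subst_vars_def subst_dom_def)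

lemma vars_subst_atom_sub: "vars_atom (subst_atom \<sigma> a) \<subseteq> vars_atom a \<union> subst_vars \<sigma>"
  using vars_subst_sub by (fastforce simp: vars_subst_atom)

lemma vars_subst_trm_sub: "vars_trm (subst_trm \<sigma> a) \<subseteq> vars_trm a \<union> subst_vars \<sigma>"
  using vars_subst_sub by (fastforce simp: vars_subst_trm)

lemma subst_trm_id_on: "(\<And>x. x \<in> vars_trm t \<Longrightarrow> \<sigma> x = Var x) \<Longrightarrow> subst_trm \<sigma> t = t"
  using subst_trm_cong[of t \<sigma> Var] by simp

lemma subst_atom_id_on: "(\<And>x. x \<in> vars_atom t \<Longrightarrow> \<sigma> x = Var x) \<Longrightarrow> subst_atom \<sigma> t = t"
  using subst_atom_cong[of t \<sigma> Var] by simp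

lemma subst_vars_comp: "subst_vars (subst_comp \<sigma> \<tau>) \<subseteq> subst_vars \<sigma> \<union> subst_vars \<tau>"
proof
  fix z assume z: "z \<in> subst_vars (subst_comp \<sigma> \<tau>)"
  show "z \<in> subst_vars \<sigma> \<union> subst_vars \<tau>"
  proof (cases "z \<in> subst_dom (subst_comp \<sigma> \<tau>)")
    case True
    then show ?thesis
      by (cases "\<sigma> z = Var z") (auto simp: subst_vars_def subst_dom_def subst_comp_def)
  next
    case False
    with z obtain x where x: "x \<in> subst_dom (subst_comp \<sigma> \<tau>)" "z \<in> vars_trm (subst_trm \<tau> (\<sigma> x))"
      by (auto simp: subst_vars_def subst_comp_def)
    from x(2) obtain y where y: "y \<in> vars_trm (\<sigma> x)" "z \<in> vars_trm (\<tau> y)" by (auto simp: vars_subst_trm)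
    show ?thesis
    proof (cases "\<sigma> x = Var x")
      case True
      with x y have "x \<in> subst_dom \<tau>" "z \<in> vars_trm (\<tau> x)"
        by (auto simp: subst_dom_def subst_comp_def)
      then show ?thesis by (auto simp: subst_vars_def)
    next
      case False
      then have xd: "x \<in> subst_dom \<sigma>" by (simp add: subst_dom_def)
      with y have "y \<in> subst_vars \<sigma>" by (auto simp: subst_vars_def)
      with y(2) vars_subst_sub[of z \<tau> y] show ?thesis by auto
    qed
  qed
qed

section \<open>Unification\<close>

definition unifs :: "(('f,'v) trm \<times> ('f,'v) trm) list \<Rightarrow> ('f,'v) subst set" where
  "unifs E = {\<sigma>. \<forall>(s,t)\<in>set E. subst_trm \<sigma> s = subst_trm \<sigma> t}"

definition eqvars :: "(('f,'v) trm \<times> ('f,'v) trm) list \<Rightarrow> 'v set" where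
  "eqvars E = (\<Union>(s,t)\<in>set E. vars_trm s \<union> vars_trm t)"

fun tsize :: "('f,'v) trm \<Rightarrow> nat" where
  "tsize (Var x) = 1"
| "tsize (Fn f ts) = Suc (sum_list (map tsize ts))"

lemma tsize_pos[simp]: "0 < tsize t"
  by (cases t) auto

definition tsz :: "(('f,'v) trm \<times> ('f,'v) trm) list \<Rightarrow> nat" where
  "tsz E = sum_list (map (\<lambda>(s,t). tsize s + tsize t) E)"

lemma finite_eqvars[simp]: "finite (eqvars E)"
  by (induction E) (auto simp: eqvars_def)

lemma size_subst_lt: "x \<in> vars_trm t \<Longrightarrow> t \<noteq> Var x \<Longrightarrow> size (\<sigma> x) < size (subst_trm \<sigma> t)"
proof (induction t)
  case (Var y) then show ?case by simp
next
  case (Fn f ts)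
  then obtain u where u: "u \<in> set ts" "x \<in> vars_trm u" by auto
  have "size (subst_trm \<sigma> u) \<le> size_list (size \<circ> subst_trm \<sigma>) ts"
    using u(1) by (intro size_list_estimation'[of u]) auto
  then have le: "size (subst_trm \<sigma> u) < size (subst_trm \<sigma> (Fn f ts))"
    by (simp add: size_list_map)
  show ?case
  proof (cases "u = Var x")
    case True with le show ?thesis by simp
  next
    case False with Fn.IH u le show ?thesis by fastforce
  qed
qed

lemma occurs_check: "subst_trm \<sigma> (Var x) = subst_trm \<sigma> t \<Longrightarrow> t \<noteq> Var x \<Longrightarrow> x \<notin> vars_trm t"
  using size_subst_lt[of x t \<sigma>] by auto

lemma unifs_Cons: "unifs ((s,t)#E) = {\<sigma>. subst_trm \<sigma> s = subst_trm \<sigma> t} \<inter> unifs E"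
  by (auto simp: unifs_def)

lemma comp_upd_self: "\<tau> x = subst_trm \<tau> t \<Longrightarrow> subst_comp (Var(x := t)) \<tau> = \<tau>"
  by (auto simp: subst_comp_def)

definition unif_rel where
  "unif_rel = inv_image (less_than <*lex*> less_than) (\<lambda>E. (card (eqvars E), tsz E))"

lemma wf_unif_rel: "wf unif_rel"
  by (auto simp: unif_rel_def)

lemma subst_vars_upd: "subst_vars (Var(x := t)) \<subseteq> {x} \<union> vars_trm t"
  by (auto simp: subst_vars_def subst_dom_def split: if_splits)

lemma unify_main:
  "\<sigma>0 \<in> unifs E \<Longrightarrow> (\<forall>x\<in>V. \<sigma>0 x = Var x) \<Longrightarrow>
   \<exists>\<mu>. \<mu> \<in> unifs E \<and> (\<forall>\<tau>\<in>unifs E. subst_comp \<mu> \<tau> = \<tau>) \<and> subst_vars \<mu> \<subseteq> eqvars E \<and>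
       (\<forall>x\<in>V. \<mu> x = Var x)"
proof (induction E arbitrary: \<sigma>0 rule: wf_induct_rule[OF wf_unif_rel])
  case (1 E)
  show ?case
  proof (cases E)
    case Nil
    then show ?thesis by (intro exI[of _ Var]) (auto simp: unifs_def subst_vars_def subst_dom_def)
  next
    case (Cons st E')
    obtain s t where st: "st = (s,t)" by fastforce
    have sub': "eqvars E' \<subseteq> eqvars E" using Cons by (auto simp: eqvars_def)
    have u': "\<sigma>0 \<in> unifs E'" and ust: "subst_trm \<sigma>0 s = subst_trm \<sigma>0 t"
      using "1.prems"(1) Cons st by (auto simp: unifs_def)
    show ?thesis
    proof (cases "s = t")
      case True
      have "(E', E) \<in> unif_rel"
      proof -
        have "card (eqvars E') \<le> card (eqvars E)" using sub' by (simp add: card_mono)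
        moreover have "tsz E' < tsz E" using Cons st True by (simp add: tsz_def)
        ultimately show ?thesis by (auto simp: unif_rel_def)
      qed
      from "1.IH"[OF this u' "1.prems"(2)] obtain \<mu> where
        \<mu>: "\<mu> \<in> unifs E'" "\<forall>\<tau>\<in>unifs E'. subst_comp \<mu> \<tau> = \<tau>" "subst_vars \<mu> \<subseteq> eqvars E'" "\<forall>x\<in>V. \<mu> x = Var x"
        by blast
      have "unifs E = unifs E'" using Cons st True by (auto simp: unifs_def)
      with \<mu> sub' show ?thesis by blast
    next
      case neq: False
      show ?thesis
      proof (cases "(\<exists>x. s = Var x) \<or> (\<exists>x. t = Var x)")
        case True
        have "\<exists>x r. x \<notin> V \<and> x \<notin> vars_trm r \<and> unifs E = unifs ((Var x, r) # E') \<and>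
                  eqvars E = {x} \<union> vars_trm r \<union> eqvars E' \<and> subst_trm \<sigma>0 (Var x) = subst_trm \<sigma>0 r"
        proof -
          { fix x r assume o: "unifs E = unifs ((Var x, r) # E')" "eqvars E = {x} \<union> vars_trm r \<union> eqvars E'"
              "subst_trm \<sigma>0 (Var x) = subst_trm \<sigma>0 r" "r \<noteq> Var x"
            have ?thesis
            proof (cases "x \<in> V")
              case False
              with o occurs_check[OF o(3) o(4)] show ?thesis by blast
            next
              case True
              with "1.prems"(2) o(3) have "\<sigma>0 x = Var x" by simp
              with o(3) have r: "subst_trm \<sigma>0 r = Var x" by simp
              then obtain y where y: "r = Var y" by (cases r) auto
              with r have "\<sigma>0 y = Var x" by simp
              moreover have "y \<noteq> x" using y o(4) by simp
              ultimately have yV: "y \<notin> V" using "1.prems"(2) by auto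
              have "unifs E = unifs ((Var y, Var x) # E')" using o(1) y by (auto simp: unifs_def)
              moreover have "eqvars E = {y} \<union> vars_trm (Var x) \<union> eqvars E'" using o(2) y by auto
              moreover have "subst_trm \<sigma>0 (Var y) = subst_trm \<sigma>0 (Var x)" using o(3) y by simp
              ultimately show ?thesis using yV \<open>y \<noteq> x\<close> by (intro exI[of _ y] exI[of _ "Var x"]) auto
            qed }
          note gen = this
          show ?thesis
          proof (cases "\<exists>x. s = Var x")
            case True
            then obtain x where x: "s = Var x" by blast
            show ?thesis
              by (rule gen[of x t]) (use x Cons st ust neq in \<open>auto simp: unifs_def eqvars_def\<close>)
          next
            case False
            with \<open>(\<exists>x. s = Var x) \<or> (\<exists>x. t = Var x)\<close> obtain x where x: "t = Var x" by blast
            show ?thesis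
              by (rule gen[of x s]) (use x Cons st ust neq in \<open>auto simp: unifs_def eqvars_def\<close>)
          qed
        qed
        then obtain x r where xr: "x \<notin> V" "x \<notin> vars_trm r" "unifs E = unifs ((Var x, r) # E')"
          "eqvars E = {x} \<union> vars_trm r \<union> eqvars E'" "subst_trm \<sigma>0 (Var x) = subst_trm \<sigma>0 r" by blast
        define \<mu>1 where "\<mu>1 = Var(x := r)"
        define E'' where "E'' = map (\<lambda>(a,b). (subst_trm \<mu>1 a, subst_trm \<mu>1 b)) E'"
        have unifs'': "\<tau> \<in> unifs E''" if "\<tau> \<in> unifs E'" "\<tau> x = subst_trm \<tau> r" for \<tau>
        proof -
          have c: "subst_comp \<mu>1 \<tau> = \<tau>" using comp_upd_self[OF that(2)] by (simp add: \<mu>1_def)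
          have "subst_trm \<tau> (subst_trm \<mu>1 a) = subst_trm \<tau> a" for a
            using subst_trm_comp[of \<mu>1 \<tau> a] c by simp
          with that(1) show ?thesis by (auto simp: unifs_def E''_def)
        qed
        have ev: "eqvars E'' \<subseteq> eqvars E - {x}"
        proof
          fix z assume "z \<in> eqvars E''"
          then obtain a b where ab: "(a,b) \<in> set E'" "z \<in> vars_trm (subst_trm \<mu>1 a) \<union> vars_trm (subst_trm \<mu>1 b)"
            by (auto simp: eqvars_def E''_def)
          then have "z \<in> (vars_trm a \<union> vars_trm b - {x}) \<union> vars_trm r"
            by (auto simp: vars_subst_trm \<mu>1_def split: if_splits)
          moreover have "z \<noteq> x" using ab xr(2) by (auto simp: vars_subst_trm \<mu>1_def split: if_splits)
          ultimately show "z \<in> eqvars E - {x}" using ab xr(4) by (auto simp: eqvars_def)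
        qed
        have "(E'', E) \<in> unif_rel"
        proof -
          have "x \<in> eqvars E" using xr(4) by auto
          then have "card (eqvars E - {x}) < card (eqvars E)" by (metis card_Diff1_less finite_eqvars)
          with ev have "card (eqvars E'') < card (eqvars E)"
            by (meson card_mono finite_Diff finite_eqvars le_less_trans)
          then show ?thesis by (auto simp: unif_rel_def)
        qed
        moreover have "\<sigma>0 \<in> unifs E''" using unifs''[OF u'] xr(5) by simp
        ultimately obtain \<mu>' where \<mu>': "\<mu>' \<in> unifs E''" "\<forall>\<tau>\<in>unifs E''. subst_comp \<mu>' \<tau> = \<tau>"
          "subst_vars \<mu>' \<subseteq> eqvars E''" "\<forall>x\<in>V. \<mu>' x = Var x"
          using "1.IH" "1.prems"(2) by blast
        define \<mu> where "\<mu> = subst_comp \<mu>1 \<mu>'"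
        have r1: "subst_trm \<mu>1 r = r" using xr(2) by (intro subst_trm_id_on) (auto simp: \<mu>1_def)
        have "\<mu> \<in> unifs ((Var x, r) # E')"
        proof -
          have "subst_trm \<mu> (Var x) = subst_trm \<mu> r"
            using r1 by (simp add: \<mu>_def) (simp add: \<mu>1_def subst_comp_def)
          moreover have "subst_trm \<mu> a = subst_trm \<mu> b" if "(a,b) \<in> set E'" for a b
            using \<mu>'(1) that by (force simp: \<mu>_def unifs_def E''_def)
          ultimately show ?thesis by (auto simp: unifs_def)
        qed
        moreover have "subst_comp \<mu> \<tau> = \<tau>" if "\<tau> \<in> unifs ((Var x, r) # E')" for \<tau>
        proof -
          have tx: "\<tau> x = subst_trm \<tau> r" and t': "\<tau> \<in> unifs E'" using that by (auto simp: unifs_def)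
          have "subst_comp \<mu>' \<tau> = \<tau>" using \<mu>'(2) unifs''[OF t' tx] by blast
          then show ?thesis using comp_upd_self[OF tx] by (simp add: \<mu>_def subst_comp_assoc \<mu>1_def)
        qed
        moreover have "subst_vars \<mu> \<subseteq> eqvars E"
          using subst_vars_comp[of \<mu>1 \<mu>'] subst_vars_upd[of x r] \<mu>'(3) ev xr(4)
          by (auto simp: \<mu>_def \<mu>1_def)
        moreover have "\<forall>y\<in>V. \<mu> y = Var y"
          using xr(1) \<mu>'(4) by (auto simp: \<mu>_def \<mu>1_def subst_comp_def)
        ultimately show ?thesis using xr(3) by blast
      next
        case False
        then obtain f ss g ts where fs: "s = Fn f ss" "t = Fn g ts" by (cases s; cases t) auto
        with ust have fg: "f = g" and ml: "map (subst_trm \<sigma>0) ss = map (subst_trm \<sigma>0) ts" by auto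
        then have len: "length ss = length ts" using map_eq_imp_length_eq by blast
        define E'' where "E'' = zip ss ts @ E'"
        have U: "unifs E'' = unifs E"
        proof -
          have "(\<forall>(a,b)\<in>set (zip ss ts). subst_trm \<tau> a = subst_trm \<tau> b) \<longleftrightarrow>
                map (subst_trm \<tau>) ss = map (subst_trm \<tau>) ts" for \<tau>
            using len
          proof (induction ss ts rule: list_induct2)
            case Nil then show ?case by simp
          next
            case (Cons a as b bs) then show ?case by auto
          qed
          then show ?thesis using fs fg Cons st by (simp add: unifs_def E''_def ball_Un)
        qed
        have V: "eqvars E'' = eqvars E"
        proof -
          have "(\<Union>(a,b)\<in>set (zip ss ts). vars_trm a \<union> vars_trm b) =
                (\<Union>a\<in>set ss. vars_trm a) \<union> (\<Union>b\<in>set ts. vars_trm b)"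
            using len
          proof (induction ss ts rule: list_induct2)
            case Nil then show ?case by simp
          next
            case (Cons a as b bs) then show ?case by auto
          qed
          then show ?thesis using fs Cons st by (auto simp: eqvars_def E''_def)
        qed
        have T: "tsz E'' < tsz E"
        proof -
          have "sum_list (map (\<lambda>(a,b). tsize a + tsize b) (zip ss ts)) =
                sum_list (map tsize ss) + sum_list (map tsize ts)"
            using len
          proof (induction ss ts rule: list_induct2)
            case Nil then show ?case by simp
          next
            case (Cons a as b bs) then show ?case by auto
          qed
          then show ?thesis using fs Cons st by (auto simp: tsz_def E''_def)
        qed
        have "(E'', E) \<in> unif_rel" using V T by (auto simp: unif_rel_def)
        from "1.IH"[OF this] U V "1.prems" show ?thesis by simp
      qed
    qed
  qed
qed


lemma atom_mgu:
  assumes "subst_atom \<sigma>0 a = subst_atom \<sigma>0 b" "\<forall>x\<in>V. \<sigma>0 x = Var x"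
  shows "\<exists>\<mu>. idem_relevant_mgu \<mu> a b \<and> (\<forall>x\<in>V. \<mu> x = Var x) \<and>
             (\<forall>\<tau>. subst_atom \<tau> a = subst_atom \<tau> b \<longrightarrow> subst_comp \<mu> \<tau> = \<tau>)"
proof -
  obtain f ts where a: "a = Atom f ts" by (cases a)
  obtain g us where b: "b = Atom g us" by (cases b)
  from assms(1) a b have fg: "f = g" and m: "map (subst_trm \<sigma>0) ts = map (subst_trm \<sigma>0) us" by auto
  then have len: "length ts = length us" using map_eq_imp_length_eq by blast
  define E where "E = zip ts us"
  have U: "\<tau> \<in> unifs E \<longleftrightarrow> subst_atom \<tau> a = subst_atom \<tau> b" for \<tau>
  proof -
    have "(\<forall>(x,y)\<in>set (zip ts us). subst_trm \<tau> x = subst_trm \<tau> y) \<longleftrightarrow>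
          map (subst_trm \<tau>) ts = map (subst_trm \<tau>) us"
      using len
    proof (induction ts us rule: list_induct2)
      case Nil then show ?case by simp
    next
      case (Cons a as b bs) then show ?case by auto
    qed
    then show ?thesis using a b fg by (simp add: unifs_def E_def)
  qed
  have EV: "eqvars E = vars_atom a \<union> vars_atom b"
  proof -
    have "(\<Union>(x,y)\<in>set (zip ts us). vars_trm x \<union> vars_trm y) =
          (\<Union>x\<in>set ts. vars_trm x) \<union> (\<Union>y\<in>set us. vars_trm y)"
      using len
    proof (induction ts us rule: list_induct2)
      case Nil then show ?case by simp
    next
      case (Cons a as b bs) then show ?case by auto
    qed
    then show ?thesis using a b by (simp add: eqvars_def E_def)
  qed
  have "\<sigma>0 \<in> unifs E" using U assms(1) by simp
  from unify_main[OF this assms(2)] obtain \<mu> where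
    \<mu>: "\<mu> \<in> unifs E" "\<forall>\<tau>\<in>unifs E. subst_comp \<mu> \<tau> = \<tau>" "subst_vars \<mu> \<subseteq> eqvars E" "\<forall>x\<in>V. \<mu> x = Var x"
    by blast
  have "idem_relevant_mgu \<mu> a b"
    unfolding idem_relevant_mgu_def is_mgu_def
    using \<mu> U EV by metis
  with \<mu> U show ?thesis by blast
qed



lemma prios_psubst[simp]: "prios (psubst \<sigma> G) = prios G"
  by (force simp: prios_def psubst_def)

lemma prios_shift[simp]: "prios (shift \<pi> G) = \<pi> ` prios G"
  by (force simp: prios_def shift_def)

lemma prios_Un[simp]: "prios (A \<union> B) = prios A \<union> prios B"
  by (simp add: prios_def image_Un)

lemma prios_insert[simp]: "prios (insert x A) = insert (snd x) (prios A)"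
  by (simp add: prios_def)

lemma prios_empty[simp]: "prios {} = {}"
  by (simp add: prios_def)

lemma prios_mem: "(a,p) \<in> G \<Longrightarrow> p \<in> prios G"
  by (force simp: prios_def)

lemma prios_memE: "p \<in> prios G \<Longrightarrow> (\<And>a. (a,p) \<in> G \<Longrightarrow> thesis) \<Longrightarrow> thesis"
  by (auto simp: prios_def)

lemma psubst_Un[simp]: "psubst \<sigma> (A \<union> B) = psubst \<sigma> A \<union> psubst \<sigma> B"
  by (simp add: psubst_def image_Un)

lemma shift_Un[simp]: "shift \<pi> (A \<union> B) = shift \<pi> A \<union> shift \<pi> B"
  by (simp add: shift_def image_Un)

lemma psubst_empty[simp]: "psubst \<sigma> {} = {}" by (simp add: psubst_def)
lemma shift_empty[simp]: "shift \<sigma> {} = {}" by (simp add: shift_def)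

lemma psubst_Var[simp]: "psubst Var G = G"
  by (auto simp: psubst_def)

lemma shift_id[simp]: "shift id G = G"
  by (auto simp: shift_def)

lemma psubst_comp: "psubst \<tau> (psubst \<sigma> G) = psubst (subst_comp \<sigma> \<tau>) G"
  by (force simp: psubst_def)

lemma mem_psubst: "x \<in> psubst \<sigma> G \<longleftrightarrow> (\<exists>a p. (a,p) \<in> G \<and> x = (subst_atom \<sigma> a, p))"
  by (force simp: psubst_def)

lemma mem_shift: "x \<in> shift \<pi> G \<longleftrightarrow> (\<exists>a p. (a,p) \<in> G \<and> x = (a, \<pi> p))"
  by (force simp: shift_def)

lemma pgoal_unique: "pgoal G \<Longrightarrow> (a,p) \<in> G \<Longrightarrow> (a',p) \<in> G \<Longrightarrow> a = a'"
  unfolding pgoal_def inj_on_def by force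

lemma pgoal_subset: "pgoal G \<Longrightarrow> H \<subseteq> G \<Longrightarrow> pgoal H"
  unfolding pgoal_def by (meson infinite_super inj_on_subset)

lemma pgoal_psubst: "pgoal G \<Longrightarrow> pgoal (psubst \<sigma> G)"
  unfolding pgoal_def psubst_def inj_on_def by force

lemma card_psubst: "pgoal G \<Longrightarrow> card (psubst \<sigma> G) = card G"
  unfolding psubst_def pgoal_def
  by (intro card_image) (force simp: inj_on_def)

lemma shifting_inj: "shifting \<pi> \<Longrightarrow> inj \<pi>"
  by (simp add: shifting_def strict_mono_imp_inj_on)

lemma shifting_less: "shifting \<pi> \<Longrightarrow> \<pi> x < \<pi> y \<longleftrightarrow> x < y"
  by (simp add: shifting_def strict_mono_less)

lemma pgoal_shift: "shifting \<pi> \<Longrightarrow> pgoal G \<Longrightarrow> pgoal (shift \<pi> G)"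
  using shifting_inj[of \<pi>] unfolding pgoal_def shift_def inj_on_def inj_def by force

lemma pgoal_Un: "pgoal A \<Longrightarrow> pgoal B \<Longrightarrow> prios A \<inter> prios B = {} \<Longrightarrow> pgoal (A \<union> B)"
  unfolding pgoal_def inj_on_def prios_def by (auto; force)

lemma shifting_id: "shifting id"
  by (simp add: shifting_def strict_mono_def)

lemma shifting_inv: "shifting \<pi> \<Longrightarrow> inv \<pi> (\<pi> x) = x"
  by (metis shifting_inj inv_f_f)

lemma shifting_translate: "shifting (\<lambda>x::rat. x + N)"
proof -
  have "bij (\<lambda>x::rat. x + N)"
    by (rule o_bij[where g="\<lambda>x. x - N"]) auto
  then show ?thesis by (simp add: shifting_def strict_mono_def)
qed

lemma front_unique:
  assumes "pgoal G" "G = insert (a,p) K" "(a,p) \<notin> K" "\<forall>q\<in>prios K. p < q"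
    "G = insert (a',p') K'" "(a',p') \<notin> K'" "\<forall>q\<in>prios K'. p' < q"
  shows "a' = a \<and> p' = p \<and> K' = K"
proof -
  have "p' = p"
  proof (rule ccontr)
    assume ne: "p' \<noteq> p"
    have "(a',p') \<in> K" using assms ne by auto
    then have "p < p'" using assms(4) prios_mem by blast
    moreover have "(a,p) \<in> K'" using assms ne by auto
    then have "p' < p" using assms(7) prios_mem by blast
    ultimately show False by simp
  qed
  moreover have "a' = a" using pgoal_unique[OF assms(1), of a p a'] assms \<open>p' = p\<close> by auto
  moreover have "K' = K" using assms \<open>p' = p\<close> \<open>a' = a\<close>
    by (metis Diff_insert_absorb)
  ultimately show ?thesis by simp
qed

lemma pgoal_vars_Un[simp]: "pgoal_vars (A \<union> B) = pgoal_vars A \<union> pgoal_vars B"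
  by (auto simp: pgoal_vars_def)

lemma pgoal_vars_insert[simp]: "pgoal_vars (insert x A) = vars_atom (fst x) \<union> pgoal_vars A"
  by (auto simp: pgoal_vars_def)

lemma pgoal_vars_shift[simp]: "pgoal_vars (shift \<pi> A) = pgoal_vars A"
  by (force simp: pgoal_vars_def shift_def)

lemma pgoal_vars_psubst: "pgoal_vars (psubst \<sigma> A) = (\<Union>x\<in>pgoal_vars A. vars_trm (\<sigma> x))"
  by (force simp: pgoal_vars_def psubst_def vars_subst_atom)

lemma pgoal_vars_psubst_sub: "pgoal_vars (psubst \<sigma> A) \<subseteq> pgoal_vars A \<union> subst_vars \<sigma>"
  using vars_subst_sub by (fastforce simp: pgoal_vars_psubst)

lemma finite_pgoal_vars: "finite G \<Longrightarrow> finite (pgoal_vars G)"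
  by (simp add: pgoal_vars_def)

lemma pgoal_vars_mono: "A \<subseteq> B \<Longrightarrow> pgoal_vars A \<subseteq> pgoal_vars B"
  by (auto simp: pgoal_vars_def)

lemma vars_atom_sub_pgoal_vars: "(a,p) \<in> G \<Longrightarrow> vars_atom a \<subseteq> pgoal_vars G"
  by (force simp: pgoal_vars_def)

lemma psubst_id_on: "(\<And>x. x \<in> pgoal_vars G \<Longrightarrow> \<sigma> x = Var x) \<Longrightarrow> psubst \<sigma> G = G"
proof -
  assume h: "\<And>x. x \<in> pgoal_vars G \<Longrightarrow> \<sigma> x = Var x"
  have "subst_atom \<sigma> a = a" if "(a,p) \<in> G" for a p
    using h vars_atom_sub_pgoal_vars[OF that] by (intro subst_atom_id_on) auto
  then show ?thesis by (force simp: psubst_def)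
qed

lemma psubst_cong: "(\<And>x. x \<in> pgoal_vars G \<Longrightarrow> \<sigma> x = \<tau> x) \<Longrightarrow> psubst \<sigma> G = psubst \<tau> G"
proof -
  assume h: "\<And>x. x \<in> pgoal_vars G \<Longrightarrow> \<sigma> x = \<tau> x"
  have "subst_atom \<sigma> a = subst_atom \<tau> a" if "(a,p) \<in> G" for a p
    using h vars_atom_sub_pgoal_vars[OF that] by (intro subst_atom_cong) auto
  then show ?thesis unfolding psubst_def by (auto intro!: image_cong)
qed

lemma vars_rename_atom: "vars_atom (subst_atom (\<lambda>x. Var (g x)) a) = g ` vars_atom a"
  by (auto simp: vars_subst_atom)

lemma pgoal_vars_rename: "pgoal_vars (psubst (\<lambda>x. Var (g x)) A) = g ` pgoal_vars A"
  by (auto simp: pgoal_vars_psubst)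

lemma clause_vars_rename:
  "clause_vars (rename_clause (\<lambda>x. Var (g x)) c) = g ` clause_vars c"
  by (simp add: clause_vars_def rename_clause_def vars_rename_atom pgoal_vars_rename image_Un)

lemma finite_clause_vars: "is_clause c \<Longrightarrow> finite (clause_vars c)"
  by (auto simp: clause_vars_def is_clause_def pgoal_def finite_pgoal_vars)

lemma fresh_renaming:
  assumes inf: "infinite (UNIV :: 'v set)" and fS: "finite (S :: 'v set)" and fA: "finite (Av :: 'v set)"
  shows "\<exists>g. bij g \<and> g ` S \<inter> Av = {}"
proof -
  have "infinite (UNIV - (S \<union> Av))" by (intro Diff_infinite_finite) (use fS fA inf in auto)
  then obtain T where T: "T \<subseteq> UNIV - (S \<union> Av)" "finite T" "card T = card S"
    using infinite_arbitrarily_large[of "UNIV - (S \<union> Av)" "card S"] by meson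
  then obtain h where h: "bij_betw h S T" using fS by (metis finite_same_card_bij)
  define g where "g = (\<lambda>x. if x \<in> S then h x else if x \<in> T then inv_into S h x else x)"
  have ST: "S \<inter> T = {}" using T by auto
  have gg: "g (g x) = x" for x
  proof -
    consider "x \<in> S" | "x \<in> T" | "x \<notin> S" "x \<notin> T" by blast
    then show ?thesis
    proof cases
      case 1
      then have "h x \<in> T" using h by (auto simp: bij_betw_def)
      then have "h x \<notin> S" using ST by blast
      then show ?thesis using 1 \<open>h x \<in> T\<close> h by (simp add: g_def bij_betw_def inv_into_f_f)
    next
      case 2
      then have "inv_into S h x \<in> S" using h by (metis bij_betw_def inv_into_into)
      have xS: "x \<notin> S" using 2 ST by blast
      have "g x = inv_into S h x" using 2 xS by (simp add: g_def)
      moreover have "h (inv_into S h x) = x" using 2 h by (metis bij_betw_def f_inv_into_f)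
      ultimately show ?thesis using \<open>inv_into S h x \<in> S\<close> by (simp add: g_def)
    next
      case 3 then show ?thesis by (simp add: g_def)
    qed
  qed
  have "bij g" by (rule o_bij[of g g]) (auto simp: gg)
  moreover have "g ` S \<inter> Av = {}" using h T by (auto simp: g_def bij_betw_def)
  ultimately show ?thesis by blast
qed

lemma renaming_Var_comp: "bij g \<Longrightarrow> renaming (\<lambda>x. Var (g x))"
  by (auto simp: renaming_def)

section \<open>Steps and the scheduling rule\<close>

lemma translate_avoid:
  assumes "finite (X::rat set)" "finite Y"
  shows "\<exists>N. \<forall>x\<in>X. \<forall>y\<in>Y. x < y + N"
proof -
  define M where "M = Max (insert 0 (abs ` (X \<union> Y)))"
  have "\<bar>z\<bar> \<le> M" if "z \<in> X \<union> Y" for z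
    using assms that by (auto simp: M_def)
  then have "x < y + (2*M+1)" if "x \<in> X" "y \<in> Y" for x y
  proof -
    have "\<bar>x\<bar> \<le> M" "\<bar>y\<bar> \<le> M" using that \<open>\<And>z. z \<in> X \<union> Y \<Longrightarrow> \<bar>z\<bar> \<le> M\<close> by auto
    then show ?thesis by linarith
  qed
  then show ?thesis by blast
qed

lemma step_exists:
  assumes "pgoal G" "G = insert (a,p) K" "(a,p) \<notin> K" "\<forall>q\<in>prios K. p < q"
    "is_clause (h,B)" "renaming \<xi>" "pgoal_vars G \<inter> clause_vars (rename_clause \<xi> (h,B)) = {}"
    "idem_relevant_mgu \<theta> a (subst_atom \<xi> h)"
  shows "\<exists>R. is_step (G, (h,B), \<xi>, \<theta>, R)"
proof -
  have fK: "finite (prios K)" using assms(1,2) by (auto simp: pgoal_def prios_def)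
  have fB: "finite (prios B)" using assms(5) by (auto simp: is_clause_def pgoal_def prios_def)
  obtain N where N: "\<forall>x\<in>prios K. \<forall>y\<in>prios B. x < y + N" using translate_avoid[OF fK fB] by blast
  have d: "prios K \<inter> prios (shift (\<lambda>x. x + N) (psubst \<xi> B)) = {}"
    using N by fastforce
  have "is_step (G, (h,B), \<xi>, \<theta>, psubst \<theta> (K \<union> shift (\<lambda>x. x + N) (psubst \<xi> B)))"
    unfolding is_step_def prod.case
    using assms shifting_translate[of N] d
    by (intro conjI exI[of _ a] exI[of _ p] exI[of _ K] exI[of _ "\<lambda>x. x + N"]) auto
  then show ?thesis by blast
qed

lemma variant_in_S:
  assumes cs: "complete_steps S" and s0: "(G,(h,B),\<xi>0,\<alpha>0,R0) \<in> S"
    and G: "G = insert (a,p) K" "(a,p) \<notin> K" "\<forall>q\<in>prios K. p < q"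
    and r: "renaming \<xi>" "pgoal_vars G \<inter> clause_vars (rename_clause \<xi> (h,B)) = {}"
    and m: "idem_relevant_mgu \<alpha> a (subst_atom \<xi> h)"
  shows "\<exists>R. (G,(h,B),\<xi>,\<alpha>,R) \<in> S"
proof -
  have st0: "is_step (G,(h,B),\<xi>0,\<alpha>0,R0)" using cs s0 by (auto simp: complete_steps_def)
  then obtain a' p' F \<pi> where w: "pgoal G" "is_clause (h,B)" "renaming \<xi>0" "G = insert (a',p') F" "(a',p') \<notin> F"
    "\<forall>q\<in>prios F. p' < q" "pgoal_vars G \<inter> clause_vars (rename_clause \<xi>0 (h, B)) = {}"
    "idem_relevant_mgu \<alpha>0 a' (subst_atom \<xi>0 h)" "shifting \<pi>"
    "prios F \<inter> prios (shift \<pi> (psubst \<xi>0 B)) = {}" "R0 = psubst \<alpha>0 (F \<union> shift \<pi> (psubst \<xi>0 B))"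
    unfolding is_step_def by auto
  from front_unique[OF w(1) G w(4,5,6)] have eq: "a' = a" "p' = p" "F = K" by auto
  define R where "R = psubst \<alpha> (K \<union> shift \<pi> (psubst \<xi> B))"
  have st: "is_step (G,(h,B),\<xi>,\<alpha>,R)"
    unfolding is_step_def using w eq G r m by (auto simp: R_def)
  have st0': "is_step (G,(h,B),\<xi>0,\<alpha>0,R0)" by fact
  have c1: "cong_lowering (G,(h,B),\<xi>,\<alpha>,R) (G,(h,B),\<xi>0,\<alpha>0,R0)"
    unfolding cong_lowering_def
    apply (rule exI[of _ G], rule exI[of _ h], rule exI[of _ B], rule exI[of _ \<xi>0], rule exI[of _ \<alpha>0],
        rule exI[of _ R0], rule exI[of _ G], rule exI[of _ \<xi>], rule exI[of _ \<alpha>], rule exI[of _ R],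
        rule exI[of _ a], rule exI[of _ p], rule exI[of _ K], rule exI[of _ "{}"], rule exI[of _ Var],
        rule exI[of _ id], rule exI[of _ \<pi>], rule exI[of _ \<pi>], rule exI[of _ id])
    using st st0 G w eq shifting_id by (auto simp: R_def)
  have c2: "cong_lowering (G,(h,B),\<xi>0,\<alpha>0,R0) (G,(h,B),\<xi>,\<alpha>,R)"
    unfolding cong_lowering_def
    apply (rule exI[of _ G], rule exI[of _ h], rule exI[of _ B], rule exI[of _ \<xi>], rule exI[of _ \<alpha>],
        rule exI[of _ R], rule exI[of _ G], rule exI[of _ \<xi>0], rule exI[of _ \<alpha>0], rule exI[of _ R0],
        rule exI[of _ a], rule exI[of _ p], rule exI[of _ K], rule exI[of _ "{}"], rule exI[of _ Var],
        rule exI[of _ id], rule exI[of _ \<pi>], rule exI[of _ \<pi>], rule exI[of _ id])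
    using st st0 G w eq shifting_id by (auto simp: R_def)
  have "(G,(h,B),\<xi>,\<alpha>,R) \<in> S"
    using cs s0 c1 c2 unfolding complete_steps_def by blast
  then show ?thesis by blast
qed



lemma step_res_pgoal:
  assumes "is_step (G, (h,B), \<xi>, \<theta>, R)"
  shows "pgoal R"
proof -
  from assms obtain a p F \<pi> where w: "pgoal G" "is_clause (h,B)" "G = insert (a,p) F"
    "shifting \<pi>" "prios F \<inter> prios (shift \<pi> (psubst \<xi> B)) = {}" "R = psubst \<theta> (F \<union> shift \<pi> (psubst \<xi> B))"
    unfolding is_step_def by auto
  have "pgoal F" using w pgoal_subset by blast
  moreover have "pgoal (shift \<pi> (psubst \<xi> B))"
    using w by (intro pgoal_shift pgoal_psubst) (auto simp: is_clause_def)
  ultimately have "pgoal (F \<union> shift \<pi> (psubst \<xi> B))" using w(5) by (intro pgoal_Un) auto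
  then have "pgoal (psubst \<theta> (F \<union> shift \<pi> (psubst \<xi> B)))" by (rule pgoal_psubst)
  then show ?thesis using w(6) by simp
qed

lemma is_stepD:
  assumes "is_step (G, (h,B), \<xi>, \<theta>, R)"
  shows "\<exists>a p K. pgoal G \<and> is_clause (h,B) \<and> renaming \<xi> \<and> G = insert (a,p) K \<and> (a,p) \<notin> K \<and> (\<forall>q\<in>prios K. p < q) \<and>
        pgoal_vars G \<inter> clause_vars (rename_clause \<xi> (h, B)) = {} \<and> idem_relevant_mgu \<theta> a (subst_atom \<xi> h)"
  using assms unfolding is_step_def by auto

definition kids :: "('f,'v) subst \<Rightarrow> ('f,'v) subst \<Rightarrow> (rat \<Rightarrow> rat) \<Rightarrow> ('f,'v) pgoal \<Rightarrow> ('f,'v) pgoal" where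
  "kids \<mu> \<xi> \<gamma> M = (\<lambda>(a,p). (subst_atom \<mu> (subst_atom \<xi> a), \<gamma> p)) ` M"

lemma kids_eq: "psubst \<mu> (shift \<gamma> (psubst \<xi> M)) = kids \<mu> \<xi> \<gamma> M"
  by (force simp: kids_def psubst_def shift_def)

lemma prios_kids[simp]: "prios (kids \<mu> \<xi> \<gamma> M) = \<gamma> ` prios M"
  by (force simp: kids_def prios_def)

lemma kids_Un: "kids \<mu> \<xi> \<gamma> (A \<union> B) = kids \<mu> \<xi> \<gamma> A \<union> kids \<mu> \<xi> \<gamma> B"
  by (simp add: kids_def image_Un)

lemma pcat3: "pcat_ok [X, K, Y] \<longleftrightarrow> pgoal X \<and> pgoal K \<and> pgoal Y \<and>
   (\<forall>p\<in>prios X. \<forall>q\<in>prios K. p < q) \<and> (\<forall>p\<in>prios X. \<forall>q\<in>prios Y. p < q) \<and> (\<forall>p\<in>prios K. \<forall>q\<in>prios Y. p < q)"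
  by (auto simp: pcat_ok_def prio_less_def)

lemma pcat2: "pcat_ok [X, Y] \<longleftrightarrow> pgoal X \<and> pgoal Y \<and> (\<forall>p\<in>prios X. \<forall>q\<in>prios Y. p < q)"
  by (auto simp: pcat_ok_def prio_less_def)

definition fimg :: "(rat \<Rightarrow> rat) \<Rightarrow> ('f,'v) pgoal \<Rightarrow> ('f,'v) pgoal" where
  "fimg f G = (\<lambda>(a,p). (a, f p)) ` G"

lemma prios_fimg[simp]: "prios (fimg f G) = f ` prios G"
  by (force simp: fimg_def prios_def)

lemma pgoal_vars_fimg[simp]: "pgoal_vars (fimg f G) = pgoal_vars G"
  by (force simp: fimg_def pgoal_vars_def)

lemma fimg_Un[simp]: "fimg f (A \<union> B) = fimg f A \<union> fimg f B"
  by (simp add: fimg_def image_Un)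

lemma fimg_psubst: "fimg f (psubst \<sigma> G) = psubst \<sigma> (fimg f G)"
  by (force simp: fimg_def psubst_def)

lemma fimg_cong: "(\<And>p. p \<in> prios G \<Longrightarrow> f p = f' p) \<Longrightarrow> fimg f G = fimg f' G"
  unfolding fimg_def prios_def by (force intro!: image_cong)

lemma fimg_shift: "(\<And>p. p \<in> prios G \<Longrightarrow> f (\<gamma> p) = \<gamma>' p) \<Longrightarrow> fimg f (shift \<gamma> G) = shift \<gamma>' G"
  unfolding fimg_def shift_def prios_def by (force simp: image_image intro!: image_cong)

lemma fimg_mem: "(a,p) \<in> G \<Longrightarrow> (a, f p) \<in> fimg f G"
  by (force simp: fimg_def)

lemma card_fimg: "pgoal G \<Longrightarrow> inj_on f (prios G) \<Longrightarrow> card (fimg f G) = card G"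
  unfolding fimg_def pgoal_def
  by (intro card_image) (force simp: inj_on_def prios_def)

datatype ('f,'v) status = Pres rat | Done "('f,'v) clause" "('f,'v) subst" "('f,'v) atom \<times> rat \<Rightarrow> ('f,'v) status"

primrec ghost :: "('f,'v) pgoal \<Rightarrow> ('f,'v) status \<Rightarrow> ('f,'v) atom" where
  "ghost G (Pres q) = (THE a. (a,q) \<in> G)"
| "ghost G (Done c \<phi> ch) = subst_atom \<phi> (fst c)"

primrec okst :: "('f,'v) clause set \<Rightarrow> ('f,'v) pgoal \<Rightarrow> ('f,'v) status \<Rightarrow> bool" where
  "okst P G (Pres q) = (q \<in> prios G)"
| "okst P G (Done c \<phi> ch) = (c \<in> P \<and> (\<forall>b\<in>snd c. okst P G (ch b) \<and> ghost G (ch b) = subst_atom \<phi> (fst b)))"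

primrec msp :: "(('f,'v) clause \<Rightarrow> ('f,'v) pgoal) \<Rightarrow> ('f,'v) status \<Rightarrow> rat set" where
  "msp M (Pres q) = {q}"
| "msp M (Done c \<phi> ch) = (\<Union>b\<in>M c. msp M (ch b))"

primrec wt :: "('f,'v) status \<Rightarrow> nat" where
  "wt (Pres q) = 0"
| "wt (Done c \<phi> ch) = Suc (\<Sum>b\<in>snd c. wt (ch b))"

primrec upd :: "rat \<Rightarrow> ('f,'v) clause \<Rightarrow> ('f,'v) subst \<Rightarrow> ('f,'v) subst \<Rightarrow> (rat \<Rightarrow> rat) \<Rightarrow>
    ('f,'v) status \<Rightarrow> ('f,'v) status" where
  "upd p0 c \<xi> \<theta> \<gamma> (Pres q) = (if q = p0 then Done c (subst_comp \<xi> \<theta>) (\<lambda>b. Pres (\<gamma> (snd b))) else Pres q)"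
| "upd p0 c \<xi> \<theta> \<gamma> (Done c' \<phi> ch) = Done c' (subst_comp \<phi> \<theta>) (\<lambda>b. upd p0 c \<xi> \<theta> \<gamma> (ch b))"

lemma ghost_Pres: "pgoal G \<Longrightarrow> (a,q) \<in> G \<Longrightarrow> ghost G (Pres q) = a"
  using pgoal_unique by (simp, blast)

definition wsum :: "('f,'v) pgoal \<Rightarrow> (rat \<Rightarrow> ('f,'v) status) \<Rightarrow> nat" where
  "wsum E st = (\<Sum>q\<in>prios E. wt (st q))"

definition futvars :: "('f,'v) step list \<Rightarrow> 'v set" where
  "futvars ss = (\<Union>s\<in>set ss. clause_vars (rename_clause (step_ren s) (step_clause s)))"

lemma subst_vars_fix:
  assumes "subst_vars \<theta> \<subseteq> Vs" "\<forall>x\<in>Vs. \<zeta> x = Var x"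
  shows "subst_trm (\<lambda>x. if x \<in> Vs then Var x else subst_trm \<theta> (\<zeta> x)) (subst_trm \<theta> t) =
         subst_trm \<theta> (subst_trm \<zeta> t)"
proof (induction t)
  case (Var y)
  show ?case
  proof (cases "y \<in> Vs")
    case True
    have "vars_trm (\<theta> y) \<subseteq> Vs" using True assms(1) vars_subst_sub[of _ \<theta> y] by blast
    then have "subst_trm (\<lambda>x. if x \<in> Vs then Var x else subst_trm \<theta> (\<zeta> x)) (\<theta> y) = \<theta> y"
      by (intro subst_trm_id_on) auto
    then show ?thesis using True assms(2) by simp
  next
    case False
    then have "\<theta> y = Var y" using assms(1) by (auto simp: subst_vars_def subst_dom_def)
    then show ?thesis using False by simp
  qed
next
  case (Fn f ts) then show ?case by simp
qed

lemma subst_vars_fix_atom: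
  assumes "subst_vars \<theta> \<subseteq> Vs" "\<forall>x\<in>Vs. \<zeta> x = Var x"
  shows "subst_atom (\<lambda>x. if x \<in> Vs then Var x else subst_trm \<theta> (\<zeta> x)) (subst_atom \<theta> a) =
         subst_atom \<theta> (subst_atom \<zeta> a)"
  using subst_vars_fix[OF assms] by (cases a) auto

locale sqctx =
  fixes P :: "('f,'v) clause set" and SQ :: "('f,'v) step set"
    and Msf Mqf :: "('f,'v) clause \<Rightarrow> ('f,'v) pgoal"
  assumes inf: "infinite (UNIV :: 'v set)"
    and prog: "program P"
    and cs: "complete_steps SQ"
    and split: "\<And>h B. is_clause (h,B) \<Longrightarrow> pcat_ok [Msf (h,B), Mqf (h,B)] \<and> B = Msf (h,B) \<union> Mqf (h,B) \<and>
       (\<forall>G \<xi> \<mu> R. (G,(h,B),\<xi>,\<mu>,R) \<in> SQ \<longrightarrow>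
          (\<exists>a p K \<gamma>. G = insert (a,p) K \<and> (a,p) \<notin> K \<and> (\<forall>q\<in>prios K. p < q) \<and> shifting \<gamma> \<and>
             pcat_ok [shift \<gamma> (psubst \<xi> (Msf (h,B))), K, shift \<gamma> (psubst \<xi> (Mqf (h,B)))] \<and>
             R = psubst \<mu> (shift \<gamma> (psubst \<xi> (Msf (h,B))) \<union> K \<union> shift \<gamma> (psubst \<xi> (Mqf (h,B))))))"
begin

lemma P_clause: "c \<in> P \<Longrightarrow> is_clause c"
  using prog by (auto simp: program_def)

lemma split_Un: "is_clause (h,B) \<Longrightarrow> B = Msf (h,B) \<union> Mqf (h,B)"
  using split by blast

lemma Ms_sub: "c \<in> P \<Longrightarrow> Msf c \<subseteq> snd c"
  using split_Un P_clause by (cases c) (metis Un_upper1 snd_conv)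

lemma sq_form:
  assumes "(G,(h,B),\<xi>,\<mu>,R) \<in> SQ" "pgoal G" "G = insert (a,p) K" "(a,p) \<notin> K" "\<forall>q\<in>prios K. p < q"
  shows "\<exists>\<gamma>. shifting \<gamma> \<and> pcat_ok [shift \<gamma> (psubst \<xi> (Msf (h,B))), K, shift \<gamma> (psubst \<xi> (Mqf (h,B)))] \<and>
             R = psubst \<mu> (shift \<gamma> (psubst \<xi> (Msf (h,B))) \<union> K \<union> shift \<gamma> (psubst \<xi> (Mqf (h,B))))"
proof -
  have "is_step (G,(h,B),\<xi>,\<mu>,R)" using assms(1) cs by (auto simp: complete_steps_def)
  then have "is_clause (h,B)" by (auto simp: is_step_def)
  from split[OF this] assms(1) obtain a' p' K' \<gamma> where
    w: "G = insert (a',p') K'" "(a',p') \<notin> K'" "\<forall>q\<in>prios K'. p' < q" "shifting \<gamma>"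
      "pcat_ok [shift \<gamma> (psubst \<xi> (Msf (h,B))), K', shift \<gamma> (psubst \<xi> (Mqf (h,B)))]"
      "R = psubst \<mu> (shift \<gamma> (psubst \<xi> (Msf (h,B))) \<union> K' \<union> shift \<gamma> (psubst \<xi> (Mqf (h,B))))"
    by blast
  from front_unique[OF assms(2,3,4,5) w(1,2,3)] have "K' = K" by simp
  with w show ?thesis by blast
qed

lemma sq_step:
  assumes "pgoal G" "G = insert (a,p) K" "(a,p) \<notin> K" "\<forall>q\<in>prios K. p < q"
    "(h,B) \<in> P" "renaming \<xi>" "pgoal_vars G \<inter> clause_vars (rename_clause \<xi> (h,B)) = {}"
    "idem_relevant_mgu \<alpha> a (subst_atom \<xi> h)"
  shows "\<exists>\<gamma>. shifting \<gamma> \<and> pcat_ok [shift \<gamma> (psubst \<xi> (Msf (h,B))), K, shift \<gamma> (psubst \<xi> (Mqf (h,B)))] \<and>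
             (G,(h,B),\<xi>,\<alpha>, psubst \<alpha> (shift \<gamma> (psubst \<xi> (Msf (h,B))) \<union> K \<union> shift \<gamma> (psubst \<xi> (Mqf (h,B))))) \<in> SQ"
proof -
  have cl: "is_clause (h,B)" using assms(5) P_clause by blast
  from step_exists[OF assms(1-4) cl assms(6-8)] obtain R where "is_step (G,(h,B),\<xi>,\<alpha>,R)" by blast
  then obtain \<xi>0 \<alpha>0 R0 where "(G,(h,B),\<xi>0,\<alpha>0,R0) \<in> SQ"
    using cs unfolding complete_steps_def by blast
  from variant_in_S[OF cs this assms(2,3,4,6,7,8)] obtain R' where R': "(G,(h,B),\<xi>,\<alpha>,R') \<in> SQ" by blast
  from sq_form[OF R' assms(1-4)] R' show ?thesis by metis
qed

lemma msp_sub: "okst P G s \<Longrightarrow> msp Msf s \<subseteq> prios G"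
proof (induction s)
  case (Pres q) then show ?case by simp
next
  case (Done c \<phi> ch)
  then have "c \<in> P" by simp
  then have "Msf c \<subseteq> snd c" by (rule Ms_sub)
  with Done show ?case by fastforce
qed

end



lemma kids_mem: "(ab,pb) \<in> M \<Longrightarrow> (subst_atom \<mu> (subst_atom \<xi> ab), \<gamma> pb) \<in> kids \<mu> \<xi> \<gamma> M"
  by (force simp: kids_def)

lemma kids_memE: "x \<in> kids \<mu> \<xi> \<gamma> M \<Longrightarrow> (\<And>ab pb. (ab,pb) \<in> M \<Longrightarrow> x = (subst_atom \<mu> (subst_atom \<xi> ab), \<gamma> pb) \<Longrightarrow> thesis) \<Longrightarrow> thesis"
  by (auto simp: kids_def)

context sqctx
begin

lemma upd_ghost:
  assumes "pgoal Gs" "Gs = insert (a,p0) K" "(a,p0) \<notin> K" "pgoal Gs'" "psubst \<theta> K \<subseteq> Gs'"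
    "subst_atom \<theta> a = subst_atom \<theta> (subst_atom \<xi> h)" "okst P Gs s"
  shows "ghost Gs' (upd p0 (h,B) \<xi> \<theta> \<gamma> s) = subst_atom \<theta> (ghost Gs s)"
proof (cases s)
  case (Pres q)
  show ?thesis
  proof (cases "q = p0")
    case True
    have "ghost Gs (Pres p0) = a" using assms(1,2) by (intro ghost_Pres) auto
    then show ?thesis using Pres True assms(6) by simp
  next
    case False
    from assms(7) Pres have "q \<in> prios Gs" by simp
    then obtain aq where aq: "(aq,q) \<in> Gs" by (rule prios_memE)
    with False assms(2) have "(aq,q) \<in> K" by auto
    then have "(subst_atom \<theta> aq, q) \<in> Gs'" using assms(5) by (force simp: psubst_def)
    then have "ghost Gs' (Pres q) = subst_atom \<theta> aq" by (rule ghost_Pres[OF assms(4)])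
    moreover have "ghost Gs (Pres q) = aq" using assms(1) aq by (rule ghost_Pres)
    ultimately show ?thesis using Pres False by simp
  qed
next
  case (Done c' \<phi> ch)
  then show ?thesis by simp
qed

lemma upd_ok:
  assumes "pgoal Gs" "Gs = insert (a,p0) K" "(a,p0) \<notin> K" "pgoal Gs'" "psubst \<theta> K \<subseteq> Gs'"
    "kids \<theta> \<xi> \<gamma> B \<subseteq> Gs'" "(h,B) \<in> P"
    "subst_atom \<theta> a = subst_atom \<theta> (subst_atom \<xi> h)"
  shows "okst P Gs s \<Longrightarrow> okst P Gs' (upd p0 (h,B) \<xi> \<theta> \<gamma> s)"
proof (induction s)
  case (Pres q)
  show ?case
  proof (cases "q = p0")
    case True
    have "okst P Gs' (Pres (\<gamma> (snd b))) \<and> ghost Gs' (Pres (\<gamma> (snd b))) = subst_atom (subst_comp \<xi> \<theta>) (fst b)"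
      if "b \<in> B" for b
    proof -
      obtain ab pb where b: "b = (ab,pb)" by fastforce
      have "(subst_atom \<theta> (subst_atom \<xi> ab), \<gamma> pb) \<in> Gs'" using kids_mem[of ab pb B \<theta> \<xi> \<gamma>] that b assms(6) by auto
      then show ?thesis using b ghost_Pres[OF assms(4)] by (auto intro: prios_mem)
    qed
    then show ?thesis using True assms(7) by simp
  next
    case False
    from Pres have "q \<in> prios Gs" by simp
    then obtain aq where aq: "(aq,q) \<in> Gs" by (rule prios_memE)
    with False assms(2) have "(aq,q) \<in> K" by auto
    then have "(subst_atom \<theta> aq, q) \<in> Gs'" using assms(5) by (force simp: psubst_def)
    then show ?thesis using False by (auto intro: prios_mem)
  qed
next
  case (Done c' \<phi> ch)
  have "okst P Gs' (upd p0 (h,B) \<xi> \<theta> \<gamma> (ch b)) \<and>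
        ghost Gs' (upd p0 (h,B) \<xi> \<theta> \<gamma> (ch b)) = subst_atom (subst_comp \<phi> \<theta>) (fst b)" if "b \<in> snd c'" for b
  proof -
    have o: "okst P Gs (ch b)" "ghost Gs (ch b) = subst_atom \<phi> (fst b)" using Done.prems that by auto
    have "okst P Gs' (upd p0 (h,B) \<xi> \<theta> \<gamma> (ch b))" using Done.IH o(1) by simp
    moreover have "ghost Gs' (upd p0 (h,B) \<xi> \<theta> \<gamma> (ch b)) = subst_atom \<theta> (ghost Gs (ch b))"
      by (rule upd_ghost[OF assms(1-5) assms(8) o(1)])
    ultimately show ?thesis using o(2) by simp
  qed
  then show ?case using Done.prems by simp
qed

lemma upd_msp: "msp Msf (upd p0 c \<xi> \<theta> \<gamma> s) \<subseteq> (msp Msf s - {p0}) \<union> \<gamma> ` prios (Msf c)"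
proof (induction s)
  case (Pres q) then show ?case by (auto simp: prios_def)
next
  case (Done c' \<phi> ch) then show ?case by fastforce
qed

definition Sim where
  "Sim Gs Us Gb Ub E st f \<zeta> Vs Fb \<longleftrightarrow>
     pgoal Gs \<and> pgoal Gb \<and> pgoal_vars Gs \<subseteq> Us \<and> Us \<subseteq> Vs \<and> finite Vs \<and> Ub = Us \<union> Fb \<and>
     Fb \<inter> Vs = {} \<and> finite Fb \<and> pgoal_vars Gb \<subseteq> Ub \<and> strict_mono_on (prios Gs) f \<and>
     Gb = fimg f Gs \<union> E \<and> f ` prios Gs \<inter> prios E = {} \<and>
     (\<forall>(a,q)\<in>E. okst P Gs (st q) \<and> subst_atom \<zeta> a = ghost Gs (st q) \<and> (\<forall>p\<in>msp Msf (st q). f p < q)) \<and>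
     (\<forall>x\<in>Vs. \<zeta> x = Var x)"

end



context sqctx
begin

lemma SimD:
  assumes "Sim Gs Us Gb Ub E st f \<zeta> Vs Fb"
  shows "pgoal Gs" "pgoal Gb" "pgoal_vars Gs \<subseteq> Us" "Us \<subseteq> Vs" "finite Vs" "Ub = Us \<union> Fb"
     "Fb \<inter> Vs = {}" "finite Fb" "pgoal_vars Gb \<subseteq> Ub" "strict_mono_on (prios Gs) f"
     "Gb = fimg f Gs \<union> E" "f ` prios Gs \<inter> prios E = {}"
     "\<And>a q. (a,q) \<in> E \<Longrightarrow> okst P Gs (st q) \<and> subst_atom \<zeta> a = ghost Gs (st q) \<and> (\<forall>p\<in>msp Msf (st q). f p < q)"
     "\<And>x. x \<in> Vs \<Longrightarrow> \<zeta> x = Var x"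
  using assms unfolding Sim_def by auto

lemma extra_step:
  assumes S: "Sim Gs Us Gb Ub E st f \<zeta> Vs Fb" and eq: "(e,q) \<in> E"
    and front: "\<forall>q'\<in>prios Gb. q' \<noteq> q \<longrightarrow> q < q'"
  shows "\<exists>s' Ub' Gb' E' st' \<zeta>' Fb'. s' \<in> SQ \<and> is_step s' \<and> step_goal s' = Gb \<and> step_clause s' \<in> P \<and>
     clause_vars (rename_clause (step_ren s') (step_clause s')) \<inter> Ub = {} \<and>
     Ub' = Ub \<union> clause_vars (rename_clause (step_ren s') (step_clause s')) \<and> step_res s' = Gb' \<and>
     Sim Gs Us Gb' Ub' E' st' f \<zeta>' Vs Fb' \<and> wsum E' st' < wsum E st"
proof -
  note Sd = SimD[OF S]
  have Eq: "okst P Gs (st q)" "subst_atom \<zeta> e = ghost Gs (st q)" "\<forall>p\<in>msp Msf (st q). f p < q"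
    using Sd(13)[OF eq] by auto
  have prGb: "prios Gb = f ` prios Gs \<union> prios E" using Sd(11) by simp
  have qE: "q \<in> prios E" using eq by (rule prios_mem)
  have fp: "f p \<in> prios Gb" "f p \<noteq> q" if "p \<in> prios Gs" for p
    using that prGb Sd(12) qE by auto
  have msp0: "msp Msf (st q) = {}"
  proof (rule ccontr)
    assume "msp Msf (st q) \<noteq> {}"
    then obtain p where p: "p \<in> msp Msf (st q)" by blast
    then have "p \<in> prios Gs" using msp_sub[OF Eq(1)] by blast
    with fp front have "q < f p" by blast
    with Eq(3) p show False by fastforce
  qed
  obtain c \<phi> ch where stq: "st q = Done c \<phi> ch"
    using msp0 by (cases "st q") auto
  obtain h B where c: "c = (h,B)" by fastforce
  have cP: "(h,B) \<in> P" using Eq(1) stq c by simp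
  have cl: "is_clause (h,B)" using cP P_clause by blast
  have pB: "pgoal B" using cl by (simp add: is_clause_def)
  have chok: "okst P Gs (ch b)" "ghost Gs (ch b) = subst_atom \<phi> (fst b)" if "b \<in> B" for b
    using Eq(1) stq c that by auto
  have fUb: "finite (Ub \<union> Vs)" using Sd(4,5,6,8) by (simp add: finite_subset)
  obtain g where g: "bij g" "g ` clause_vars (h,B) \<inter> (Ub \<union> Vs) = {}"
    using fresh_renaming[OF inf finite_clause_vars[OF cl] fUb] by blast
  define \<xi>' where "\<xi>' = (\<lambda>x. Var (g x) :: ('f,'v) trm)"
  have ren: "renaming \<xi>'" unfolding \<xi>'_def by (rule renaming_Var_comp[OF g(1)])
  define CV where "CV = clause_vars (rename_clause \<xi>' (h,B))"
  have CV: "CV = g ` clause_vars (h,B)" unfolding CV_def \<xi>'_def by (rule clause_vars_rename)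
  have CVU: "CV \<inter> Ub = {}" using g(2) CV by blast
  define K where "K = Gb - {(e,q)}"
  have eGb: "(e,q) \<in> Gb" using Sd(11) eq by auto
  have Gbi: "Gb = insert (e,q) K" "(e,q) \<notin> K" using eGb by (auto simp: K_def)
  have Kfront: "\<forall>q'\<in>prios K. q < q'"
  proof
    fix q' assume "q' \<in> prios K"
    then obtain a' where a': "(a',q') \<in> K" by (rule prios_memE)
    then have "(a',q') \<in> Gb" "(a',q') \<noteq> (e,q)" by (auto simp: K_def)
    moreover have "q' \<noteq> q"
      using pgoal_unique[OF Sd(2) eGb, of a'] calculation by auto
    ultimately show "q < q'" using front prios_mem by blast
  qed
  define \<tau> where "\<tau> = (\<lambda>y. if inv g y \<in> clause_vars (h,B) then \<phi> (inv g y) else \<zeta> y)"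
  have ginv: "g (inv g y) = y" for y using g(1) by (simp add: bij_def surj_f_inv_f)
  have invg: "inv g (g x) = x" for x using g(1) by (simp add: bij_def inv_f_f)
  have \<tau>U: "\<tau> y = \<zeta> y" if "y \<in> Ub \<union> Vs" for y
  proof -
    have "inv g y \<notin> clause_vars (h,B)"
    proof
      assume "inv g y \<in> clause_vars (h,B)"
      then have "y \<in> g ` clause_vars (h,B)" using ginv[of y] by (metis imageI)
      with g(2) that show False by blast
    qed
    then show ?thesis by (simp add: \<tau>_def)
  qed
  have \<tau>g: "\<tau> (g x) = \<phi> x" if "x \<in> clause_vars (h,B)" for x
    using that by (simp add: \<tau>_def invg)
  have \<tau>V: "\<forall>x\<in>Vs. \<tau> x = Var x" using \<tau>U Sd(14) by auto
  have veGb: "vars_atom e \<subseteq> Ub" using vars_atom_sub_pgoal_vars[OF eGb] Sd(9) by blast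
  have \<tau>e: "subst_atom \<tau> e = subst_atom \<zeta> e"
    using veGb \<tau>U by (intro subst_atom_cong) auto
  have \<tau>h: "subst_atom \<tau> (subst_atom \<xi>' a) = subst_atom \<phi> a" if "vars_atom a \<subseteq> clause_vars (h,B)" for a
  proof -
    have "subst_atom \<tau> (subst_atom \<xi>' a) = subst_atom (subst_comp \<xi>' \<tau>) a" by simp
    also have "\<dots> = subst_atom \<phi> a"
      using that \<tau>g by (intro subst_atom_cong) (auto simp: subst_comp_def \<xi>'_def)
    finally show ?thesis .
  qed
  have vh: "vars_atom h \<subseteq> clause_vars (h,B)" by (simp add: clause_vars_def)
  have unif: "subst_atom \<tau> e = subst_atom \<tau> (subst_atom \<xi>' h)"
    using \<tau>e Eq(2) stq c \<tau>h[OF vh] by simp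
  from atom_mgu[OF unif \<tau>V] obtain \<mu> where \<mu>: "idem_relevant_mgu \<mu> e (subst_atom \<xi>' h)"
    "\<forall>x\<in>Vs. \<mu> x = Var x" "\<forall>\<tau>'. subst_atom \<tau>' e = subst_atom \<tau>' (subst_atom \<xi>' h) \<longrightarrow> subst_comp \<mu> \<tau>' = \<tau>'"
    by blast
  have \<mu>\<tau>: "subst_comp \<mu> \<tau> = \<tau>" using \<mu>(3) unif by blast
  have disjG: "pgoal_vars Gb \<inter> clause_vars (rename_clause \<xi>' (h,B)) = {}"
    using Sd(9) g(2) CV unfolding CV_def by blast
  from sq_step[OF Sd(2) Gbi Kfront cP ren disjG \<mu>(1)] obtain \<gamma> where
    \<gamma>: "shifting \<gamma>" "pcat_ok [shift \<gamma> (psubst \<xi>' (Msf (h,B))), K, shift \<gamma> (psubst \<xi>' (Mqf (h,B)))]"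
      "(Gb,(h,B),\<xi>',\<mu>, psubst \<mu> (shift \<gamma> (psubst \<xi>' (Msf (h,B))) \<union> K \<union> shift \<gamma> (psubst \<xi>' (Mqf (h,B))))) \<in> SQ"
    by blast
  define Ms where "Ms = Msf (h,B)"
  define Mq where "Mq = Mqf (h,B)"
  have BMs: "B = Ms \<union> Mq" using split_Un[OF cl] by (simp add: Ms_def Mq_def)
  define Rb where "Rb = psubst \<mu> (shift \<gamma> (psubst \<xi>' Ms) \<union> K \<union> shift \<gamma> (psubst \<xi>' Mq))"
  have sSQ: "(Gb,(h,B),\<xi>',\<mu>,Rb) \<in> SQ" using \<gamma>(3) by (simp add: Rb_def Ms_def Mq_def)
  have sst: "is_step (Gb,(h,B),\<xi>',\<mu>,Rb)" using sSQ cs by (auto simp: complete_steps_def)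
  have pc: "\<forall>p\<in>\<gamma> ` prios Ms. \<forall>q\<in>prios K. p < q" "\<forall>p\<in>prios K. \<forall>q\<in>\<gamma> ` prios Mq. p < q"
    using \<gamma>(2) unfolding pcat3 by (auto simp: Ms_def Mq_def)
  have prB: "prios B = prios Ms \<union> prios Mq" using BMs by simp
  have Kdisj: "prios K \<inter> \<gamma> ` prios B = {}" using pc prB by fastforce
  have Rb_eq: "Rb = psubst \<mu> K \<union> kids \<mu> \<xi>' \<gamma> B"
    unfolding Rb_def using BMs by (auto simp: kids_eq kids_Un)
  have qnot: "q \<notin> f ` prios Gs" using Sd(12) qE by blast
  have K_eq: "K = fimg f Gs \<union> (E - {(e,q)})"
  proof -
    have "(e,q) \<notin> fimg f Gs" using qnot prios_mem[of e q "fimg f Gs"] by auto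
    then show ?thesis using Sd(11) by (auto simp: K_def)
  qed
  have fimg_fix: "psubst \<mu> (fimg f Gs) = fimg f Gs"
    using Sd(3,4) \<mu>(2) by (intro psubst_id_on) auto
  define E' where "E' = psubst \<mu> (E - {(e,q)}) \<union> kids \<mu> \<xi>' \<gamma> B"
  have Gb': "Rb = fimg f Gs \<union> E'" using Rb_eq K_eq fimg_fix by (auto simp: E'_def)
  define st' where "st' = (\<lambda>q'. if q' \<in> \<gamma> ` prios B then ch (THE b. b \<in> B \<and> \<gamma> (snd b) = q') else st q')"
  have st'_kid: "st' (\<gamma> (snd b)) = ch b" if "b \<in> B" for b
  proof -
    have "(THE b'. b' \<in> B \<and> \<gamma> (snd b') = \<gamma> (snd b)) = b"
    proof (rule the_equality)
      show "b \<in> B \<and> \<gamma> (snd b) = \<gamma> (snd b)" using that by simp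
    next
      fix b' assume "b' \<in> B \<and> \<gamma> (snd b') = \<gamma> (snd b)"
      then have "b' \<in> B" "snd b' = snd b" using shifting_inj[OF \<gamma>(1)] by (auto dest: injD)
      then show "b' = b" using pB that unfolding pgoal_def inj_on_def by blast
    qed
    then show ?thesis using that by (auto simp: st'_def prios_def)
  qed
  have st'_old: "st' q' = st q'" if "q' \<in> prios K" for q'
    using that Kdisj by (auto simp: st'_def)
  have vK: "pgoal_vars K \<subseteq> Ub" using Sd(9) Gbi by auto
  have vB: "pgoal_vars (psubst \<xi>' M) \<subseteq> CV" if "M \<subseteq> B" for M
  proof -
    have "pgoal_vars (psubst \<xi>' M) \<subseteq> pgoal_vars (psubst \<xi>' B)" using that by (intro pgoal_vars_mono) (auto simp: psubst_def)
    then show ?thesis by (auto simp: CV_def clause_vars_def rename_clause_def)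
  qed
  have vh': "vars_atom (subst_atom \<xi>' h) \<subseteq> CV" by (auto simp: CV_def clause_vars_def rename_clause_def)
  have svm: "subst_vars \<mu> \<subseteq> Ub \<union> CV" using \<mu>(1) veGb vh' by (auto simp: idem_relevant_mgu_def)
  have vRb: "pgoal_vars Rb \<subseteq> Ub \<union> CV"
  proof -
    have "pgoal_vars (shift \<gamma> (psubst \<xi>' Ms) \<union> K \<union> shift \<gamma> (psubst \<xi>' Mq)) \<subseteq> Ub \<union> CV"
      using vK vB[of Ms] vB[of Mq] BMs by auto
    then show ?thesis unfolding Rb_def
      using pgoal_vars_psubst_sub[of \<mu> "shift \<gamma> (psubst \<xi>' Ms) \<union> K \<union> shift \<gamma> (psubst \<xi>' Mq)"] svm
      by (meson le_sup_iff order_trans subset_refl sup_mono)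
  qed
  have prE': "prios E' = (prios E - {q}) \<union> \<gamma> ` prios B"
  proof -
    have pE: "pgoal E" using Sd(2,11) pgoal_subset by blast
    have "prios (E - {(e,q)}) = prios E - {q}"
    proof
      show "prios (E - {(e,q)}) \<subseteq> prios E - {q}"
      proof
        fix x assume "x \<in> prios (E - {(e,q)})"
        then obtain a' where "(a',x) \<in> E" "(a',x) \<noteq> (e,q)" by (auto elim: prios_memE)
        moreover then have "x \<noteq> q" using pgoal_unique[OF pE eq, of a'] by auto
        ultimately show "x \<in> prios E - {q}" by (auto intro: prios_mem)
      qed
    next
      show "prios E - {q} \<subseteq> prios (E - {(e,q)})" by (force simp: prios_def)
    qed
    then show ?thesis by (simp add: E'_def)
  qed
  have EK: "prios E - {q} \<subseteq> prios K"
  proof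
    fix x assume "x \<in> prios E - {q}"
    then obtain a where "(a,x) \<in> E" "x \<noteq> q" by (auto elim: prios_memE)
    then have "(a,x) \<in> K" using Sd(11) by (auto simp: K_def)
    then show "x \<in> prios K" by (rule prios_mem)
  qed
  have simnew: "Sim Gs Us Rb (Ub \<union> CV) E' st' f \<tau> Vs (Fb \<union> CV)"
    unfolding Sim_def
  proof (intro conjI)
    show "pgoal Gs" by fact
    show "pgoal Rb" using step_res_pgoal[OF sst] .
    show "pgoal_vars Gs \<subseteq> Us" "Us \<subseteq> Vs" "finite Vs" by fact+
    show "Ub \<union> CV = Us \<union> (Fb \<union> CV)" using Sd(6) by auto
    show "(Fb \<union> CV) \<inter> Vs = {}" using Sd(7) g(2) CV by auto
    show "finite (Fb \<union> CV)" using Sd(8) CV finite_clause_vars[OF cl] by simp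
    show "pgoal_vars Rb \<subseteq> Ub \<union> CV" by (rule vRb)
    show "strict_mono_on (prios Gs) f" by fact
    show "Rb = fimg f Gs \<union> E'" by (rule Gb')
    show "f ` prios Gs \<inter> prios E' = {}"
    proof -
      have "f ` prios Gs \<subseteq> prios K" using K_eq by auto
      then have "f ` prios Gs \<inter> \<gamma> ` prios B = {}" using Kdisj by blast
      then show ?thesis using prE' Sd(12) by blast
    qed
    show "\<forall>x\<in>Vs. \<tau> x = Var x" by (rule \<tau>V)
    show "\<forall>(a, q)\<in>E'. okst P Gs (st' q) \<and> subst_atom \<tau> a = ghost Gs (st' q) \<and> (\<forall>p\<in>msp Msf (st' q). f p < q)"
    proof (intro ballI, clarify)
      fix a2 q2 assume m: "(a2,q2) \<in> E'"
      show "okst P Gs (st' q2) \<and> subst_atom \<tau> a2 = ghost Gs (st' q2) \<and> (\<forall>p\<in>msp Msf (st' q2). f p < q2)"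
      proof (cases "(a2,q2) \<in> psubst \<mu> (E - {(e,q)})")
        case True
        then obtain a3 where a3: "(a3,q2) \<in> E - {(e,q)}" "a2 = subst_atom \<mu> a3"
          by (auto simp: mem_psubst)
        have "(a3,q2) \<in> K" using a3(1) K_eq by blast
        then have q2K: "q2 \<in> prios K" by (rule prios_mem)
        have o3: "okst P Gs (st q2)" "subst_atom \<zeta> a3 = ghost Gs (st q2)" "\<forall>p\<in>msp Msf (st q2). f p < q2"
          using Sd(13)[of a3 q2] a3(1) by auto
        have "(a3,q2) \<in> Gb" using a3(1) Sd(11) by auto
        then have v3: "vars_atom a3 \<subseteq> Ub" using vars_atom_sub_pgoal_vars Sd(9) by blast
        have "subst_atom \<tau> a2 = subst_atom \<tau> a3"
          using a3(2) \<mu>\<tau> subst_atom_comp[of \<mu> \<tau> a3] by simp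
        also have "\<dots> = subst_atom \<zeta> a3" using v3 \<tau>U by (intro subst_atom_cong) auto
        finally show ?thesis using o3 st'_old[OF q2K] by simp
      next
        case False
        with m have "(a2,q2) \<in> kids \<mu> \<xi>' \<gamma> B" by (simp add: E'_def)
        then obtain ab pb where b: "(ab,pb) \<in> B" "a2 = subst_atom \<mu> (subst_atom \<xi>' ab)" "q2 = \<gamma> pb"
          by (rule kids_memE) auto
        have st2: "st' q2 = ch (ab,pb)" using st'_kid[OF b(1)] b(3) by simp
        have vab: "vars_atom ab \<subseteq> clause_vars (h,B)"
          using b(1) by (force simp: clause_vars_def pgoal_vars_def)
        have "subst_atom \<tau> a2 = subst_atom \<tau> (subst_atom \<xi>' ab)"
          using b(2) \<mu>\<tau> subst_atom_comp[of \<mu> \<tau> "subst_atom \<xi>' ab"] by simp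
        also have "\<dots> = subst_atom \<phi> ab" by (rule \<tau>h[OF vab])
        also have "\<dots> = ghost Gs (ch (ab,pb))" using chok(2)[OF b(1)] by simp
        finally have gh: "subst_atom \<tau> a2 = ghost Gs (st' q2)" using st2 by simp
        have ms: "\<forall>p\<in>msp Msf (st' q2). f p < q2"
        proof
          fix p assume p: "p \<in> msp Msf (st' q2)"
          show "f p < q2"
          proof (cases "(ab,pb) \<in> Ms")
            case True
            then have "msp Msf (ch (ab,pb)) \<subseteq> msp Msf (st q)" using stq c by (auto simp: Ms_def)
            then show ?thesis using p st2 msp0 by auto
          next
            case False
            then have "(ab,pb) \<in> Mq" using b(1) BMs by auto
            then have "q2 \<in> \<gamma> ` prios Mq" using b(3) prios_mem by blast
            moreover have "p \<in> prios Gs" using p st2 msp_sub[OF chok(1)[OF b(1)]] by auto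
            then have "f p \<in> prios K" using K_eq by auto
            ultimately show ?thesis using pc(2) by blast
          qed
        qed
        show ?thesis using chok(1)[OF b(1)] st2 gh ms by simp
      qed
    qed
  qed
  have ws: "wsum E' st' < wsum E st"
  proof -
    have fE: "finite (prios E)" using Sd(2,11) by (auto simp: pgoal_def prios_def)
    have fB: "finite B" using pB by (simp add: pgoal_def)
    have d: "(prios E - {q}) \<inter> \<gamma> ` prios B = {}" using EK Kdisj by blast
    have "wsum E' st' = (\<Sum>x\<in>prios E - {q}. wt (st' x)) + (\<Sum>x\<in>\<gamma> ` prios B. wt (st' x))"
      unfolding wsum_def prE' using fE fB d by (simp add: sum.union_disjoint prios_def)
    also have "(\<Sum>x\<in>prios E - {q}. wt (st' x)) = (\<Sum>x\<in>prios E - {q}. wt (st x))"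
      using EK st'_old by (intro sum.cong) auto
    also have "(\<Sum>x\<in>\<gamma> ` prios B. wt (st' x)) = (\<Sum>b\<in>B. wt (ch b))"
    proof -
      have "(\<Sum>x\<in>\<gamma> ` prios B. wt (st' x)) = (\<Sum>x\<in>prios B. wt (st' (\<gamma> x)))"
        using shifting_inj[OF \<gamma>(1)] by (simp add: sum.reindex inj_on_def inj_def)
      also have "\<dots> = (\<Sum>b\<in>B. wt (st' (\<gamma> (snd b))))"
        using pB unfolding prios_def pgoal_def by (simp add: sum.reindex)
      also have "\<dots> = (\<Sum>b\<in>B. wt (ch b))" using st'_kid by simp
      finally show ?thesis .
    qed
    finally have a: "wsum E' st' = (\<Sum>x\<in>prios E - {q}. wt (st x)) + (\<Sum>b\<in>B. wt (ch b))" .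
    have "wsum E st = wt (st q) + (\<Sum>x\<in>prios E - {q}. wt (st x))"
      unfolding wsum_def using fE qE by (simp add: sum.remove)
    moreover have "wt (st q) = Suc (\<Sum>b\<in>B. wt (ch b))" using stq c by simp
    ultimately show ?thesis using a by simp
  qed
  show ?thesis
    apply (rule exI[of _ "(Gb,(h,B),\<xi>',\<mu>,Rb)"], rule exI[of _ "Ub \<union> CV"], rule exI[of _ Rb],
        rule exI[of _ E'], rule exI[of _ st'], rule exI[of _ \<tau>], rule exI[of _ "Fb \<union> CV"])
    using sSQ sst cP Sd(9) disjG simnew ws CVU
    by (auto simp: step_goal_def step_clause_def step_ren_def step_res_def CV_def)
qed

end



lemma fimg_insert: "fimg f (insert (a,p) G) = insert (a, f p) (fimg f G)"
  by (simp add: fimg_def)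

lemma fimg_kids: "(\<And>p. p \<in> prios M \<Longrightarrow> f (\<gamma> p) = \<gamma>' p) \<Longrightarrow> fimg f (kids \<mu> \<xi> \<gamma> M) = kids \<mu> \<xi> \<gamma>' M"
  unfolding fimg_def kids_def prios_def by (force simp: image_image intro!: image_cong)

context sqctx
begin

lemma small_step:
  assumes S: "Sim Gs Us Gb Ub E st f \<zeta> Vs Fb"
    and sSQ: "s \<in> SQ" and sst: "is_step s" and sg: "step_goal s = Gs" and sc: "step_clause s \<in> P"
    and CVU: "clause_vars (rename_clause (step_ren s) (step_clause s)) \<inter> Us = {}"
    and CVV: "clause_vars (rename_clause (step_ren s) (step_clause s)) \<subseteq> Vs"
    and Emin: "\<forall>x\<in>prios E. \<exists>y\<in>prios Gs. f y < x"
  shows "\<exists>s' E' st' f' \<zeta>'. s' \<in> SQ \<and> is_step s' \<and> step_goal s' = Gb \<and> step_clause s' = step_clause s \<and>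
     step_ren s' = step_ren s \<and>
     Sim (step_res s) (Us \<union> clause_vars (rename_clause (step_ren s) (step_clause s))) (step_res s')
         (Ub \<union> clause_vars (rename_clause (step_ren s) (step_clause s))) E' st' f' \<zeta>' Vs Fb"
proof -
  note Sd = SimD[OF S]
  obtain Gs0 c \<xi> \<theta> Rs where s: "s = (Gs0, c, \<xi>, \<theta>, Rs)" by (cases s) auto
  obtain h B where c: "c = (h,B)" by fastforce
  have Gs0: "Gs0 = Gs" using sg s by (simp add: step_goal_def)
  define CVs where "CVs = clause_vars (rename_clause \<xi> (h,B))"
  have CVs: "CVs = clause_vars (rename_clause (step_ren s) (step_clause s))"
    by (simp add: CVs_def s c step_ren_def step_clause_def)
  have cP: "(h,B) \<in> P" using sc s c by (simp add: step_clause_def)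
  have sst': "is_step (Gs, (h,B), \<xi>, \<theta>, Rs)" using sst s c Gs0 by simp
  from is_stepD[OF sst'] obtain a p0 K where w: "pgoal Gs" "is_clause (h,B)" "renaming \<xi>"
    "Gs = insert (a,p0) K" "(a,p0) \<notin> K" "\<forall>q\<in>prios K. p0 < q"
    "pgoal_vars Gs \<inter> CVs = {}" "idem_relevant_mgu \<theta> a (subst_atom \<xi> h)"
    unfolding CVs_def by blast
  have sSQ': "(Gs, (h,B), \<xi>, \<theta>, Rs) \<in> SQ" using sSQ s c Gs0 by simp
  define Ms where "Ms = Msf (h,B)"
  define Mq where "Mq = Mqf (h,B)"
  have BMs: "B = Ms \<union> Mq" using split_Un[OF w(2)] by (simp add: Ms_def Mq_def)
  have MsMq: "\<forall>p\<in>prios Ms. \<forall>q\<in>prios Mq. p < q" using split[OF w(2)] unfolding pcat2 Ms_def Mq_def by blast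
  from sq_form[OF sSQ' w(1,4,5,6)] obtain \<gamma>s where gs: "shifting \<gamma>s"
    "pcat_ok [shift \<gamma>s (psubst \<xi> Ms), K, shift \<gamma>s (psubst \<xi> Mq)]"
    "Rs = psubst \<theta> (shift \<gamma>s (psubst \<xi> Ms) \<union> K \<union> shift \<gamma>s (psubst \<xi> Mq))"
    unfolding Ms_def Mq_def by blast
  define Kb where "Kb = fimg f K \<union> E"
  have Gbi: "Gb = insert (a, f p0) Kb" using Sd(11) w(4) by (simp add: Kb_def fimg_insert)
  have p0G: "p0 \<in> prios Gs" using w(4) by simp
  have KG: "prios K \<subseteq> prios Gs" using w(4) by auto
  have fmono: "f x < f y" if "x \<in> prios Gs" "y \<in> prios Gs" "x < y" for x y
    using Sd(10) that by (simp add: strict_mono_on_def)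
  have Kbfront: "\<forall>q\<in>prios Kb. f p0 < q"
  proof
    fix q assume "q \<in> prios Kb"
    then consider "q \<in> f ` prios K" | "q \<in> prios E" by (auto simp: Kb_def)
    then show "f p0 < q"
    proof cases
      case 1 then show ?thesis using w(6) fmono p0G KG by blast
    next
      case 2
      then obtain y where y: "y \<in> prios Gs" "f y < q" using Emin by blast
      have "f p0 \<le> f y"
      proof (cases "y = p0")
        case False
        then have "y \<in> prios K" using y(1) w(4) by auto
        then show ?thesis using fmono[OF p0G y(1)] w(6) by fastforce
      qed simp
      with y show ?thesis by simp
    qed
  qed
  have aKb: "(a, f p0) \<notin> Kb" using Kbfront prios_mem by blast
  have vGb: "pgoal_vars Gb \<inter> CVs = {}"
    using Sd(9) Sd(6) Sd(7) CVU CVV CVs by blast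
  from sq_step[OF Sd(2) Gbi aKb Kbfront cP w(3) vGb[unfolded CVs_def] w(8)] obtain \<gamma>b where gb: "shifting \<gamma>b"
    "pcat_ok [shift \<gamma>b (psubst \<xi> Ms), Kb, shift \<gamma>b (psubst \<xi> Mq)]"
    "(Gb,(h,B),\<xi>,\<theta>, psubst \<theta> (shift \<gamma>b (psubst \<xi> Ms) \<union> Kb \<union> shift \<gamma>b (psubst \<xi> Mq))) \<in> SQ"
    unfolding Ms_def Mq_def by blast
  define Rb where "Rb = psubst \<theta> (shift \<gamma>b (psubst \<xi> Ms) \<union> Kb \<union> shift \<gamma>b (psubst \<xi> Mq))"
  have bSQ: "(Gb,(h,B),\<xi>,\<theta>,Rb) \<in> SQ" using gb(3) by (simp add: Rb_def)
  have bst: "is_step (Gb,(h,B),\<xi>,\<theta>,Rb)" using bSQ cs by (auto simp: complete_steps_def)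
  have pcs: "\<forall>p\<in>\<gamma>s ` prios Ms. \<forall>q\<in>prios K. p < q" "\<forall>p\<in>prios K. \<forall>q\<in>\<gamma>s ` prios Mq. p < q"
    using gs(2) unfolding pcat3 by auto
  have pcb: "\<forall>p\<in>\<gamma>b ` prios Ms. \<forall>q\<in>prios Kb. p < q" "\<forall>p\<in>prios Kb. \<forall>q\<in>\<gamma>b ` prios Mq. p < q"
    using gb(2) unfolding pcat3 by auto
  have prB: "prios B = prios Ms \<union> prios Mq" using BMs by simp
  have SBK: "\<gamma>s p \<notin> prios K" if "p \<in> prios B" for p
    using that prB pcs by fastforce
  have invs: "inv \<gamma>s (\<gamma>s p) = p" for p using shifting_inv[OF gs(1)] .
  define f' where "f' = (\<lambda>p. if p \<in> prios K then f p else \<gamma>b (inv \<gamma>s p))"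
  have f'K: "f' p = f p" if "p \<in> prios K" for p using that by (simp add: f'_def)
  have f'B: "f' (\<gamma>s p) = \<gamma>b p" if "p \<in> prios B" for p using SBK[OF that] by (simp add: f'_def invs)
  have Rs_eq: "Rs = psubst \<theta> K \<union> kids \<theta> \<xi> \<gamma>s B"
    unfolding gs(3) using BMs by (auto simp: kids_eq kids_Un)
  have Rb_eq: "Rb = psubst \<theta> (fimg f K) \<union> psubst \<theta> E \<union> kids \<theta> \<xi> \<gamma>b B"
    unfolding Rb_def Kb_def using BMs by (auto simp: kids_eq kids_Un)
  have Rbf: "Rb = fimg f' Rs \<union> psubst \<theta> E"
  proof -
    have "fimg f' (psubst \<theta> K) = psubst \<theta> (fimg f K)"
      by (simp add: fimg_psubst) (metis f'K fimg_cong)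
    moreover have "fimg f' (kids \<theta> \<xi> \<gamma>s B) = kids \<theta> \<xi> \<gamma>b B" by (rule fimg_kids) (rule f'B)
    ultimately show ?thesis using Rs_eq Rb_eq by auto
  qed
  have pRs: "pgoal Rs" using step_res_pgoal[OF sst'] .
  have pRb: "pgoal Rb" using step_res_pgoal[OF bst] .
  have unif: "subst_atom \<theta> a = subst_atom \<theta> (subst_atom \<xi> h)"
    using w(8) by (simp add: idem_relevant_mgu_def is_mgu_def)
  have va: "vars_atom a \<subseteq> Us" using Sd(3) w(4) by auto
  have vh: "vars_atom (subst_atom \<xi> h) \<subseteq> CVs" by (auto simp: CVs_def clause_vars_def rename_clause_def)
  have svt: "subst_vars \<theta> \<subseteq> Us \<union> CVs" using w(8) va vh by (auto simp: idem_relevant_mgu_def)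
  have svV: "subst_vars \<theta> \<subseteq> Vs" using svt Sd(4) CVV CVs by blast
  have vM: "pgoal_vars (psubst \<xi> M) \<subseteq> CVs" if "M \<subseteq> B" for M
  proof -
    have "pgoal_vars (psubst \<xi> M) \<subseteq> pgoal_vars (psubst \<xi> B)" using that by (intro pgoal_vars_mono) (auto simp: psubst_def)
    then show ?thesis by (auto simp: CVs_def clause_vars_def rename_clause_def)
  qed
  have vRs: "pgoal_vars Rs \<subseteq> Us \<union> CVs"
  proof -
    have "pgoal_vars (shift \<gamma>s (psubst \<xi> Ms) \<union> K \<union> shift \<gamma>s (psubst \<xi> Mq)) \<subseteq> Us \<union> CVs"
      using vM[of Ms] vM[of Mq] BMs Sd(3) w(4) by auto
    then show ?thesis unfolding gs(3)
      using pgoal_vars_psubst_sub[of \<theta> "shift \<gamma>s (psubst \<xi> Ms) \<union> K \<union> shift \<gamma>s (psubst \<xi> Mq)"] svt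
      by (meson le_sup_iff order_trans subset_refl sup_mono)
  qed
  have vRb: "pgoal_vars Rb \<subseteq> Ub \<union> CVs"
  proof -
    have "pgoal_vars Kb \<subseteq> Ub" using Sd(9) Gbi by auto
    then have "pgoal_vars (shift \<gamma>b (psubst \<xi> Ms) \<union> Kb \<union> shift \<gamma>b (psubst \<xi> Mq)) \<subseteq> Ub \<union> CVs"
      using vM[of Ms] vM[of Mq] BMs by auto
    moreover have "subst_vars \<theta> \<subseteq> Ub \<union> CVs" using svt Sd(6) by auto
    ultimately show ?thesis unfolding Rb_def
      using pgoal_vars_psubst_sub[of \<theta> "shift \<gamma>b (psubst \<xi> Ms) \<union> Kb \<union> shift \<gamma>b (psubst \<xi> Mq)"]
      by (meson le_sup_iff order_trans subset_refl sup_mono)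
  qed
  have prRs: "prios Rs = \<gamma>s ` prios B \<union> prios K" using Rs_eq by auto
  have fK: "f ` prios K \<subseteq> prios Kb" by (auto simp: Kb_def)
  have EKb: "prios E \<subseteq> prios Kb" by (auto simp: Kb_def)
  have smono: "strict_mono_on (prios Rs) f'"
  proof (rule strict_mono_onI)
    fix x y assume xy: "x \<in> prios Rs" "y \<in> prios Rs" "x < y"
    show "f' x < f' y"
    proof (cases "x \<in> prios K")
      case xK: True
      show ?thesis
      proof (cases "y \<in> prios K")
        case True then show ?thesis using xK xy(3) f'K fmono KG by auto
      next
        case False
        then obtain y' where y': "y' \<in> prios B" "y = \<gamma>s y'" using xy(2) prRs by auto
        have "y' \<in> prios Mq"
        proof (rule ccontr)
          assume "y' \<notin> prios Mq"
          then have "y' \<in> prios Ms" using y' prB by auto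
          then show False using pcs(1) xK xy(3) y' by fastforce
        qed
        then show ?thesis using pcb(2) fK xK f'K f'B y' by fastforce
      qed
    next
      case xK: False
      then obtain x' where x': "x' \<in> prios B" "x = \<gamma>s x'" using xy(1) prRs by auto
      show ?thesis
      proof (cases "y \<in> prios K")
        case yK: True
        have "x' \<in> prios Ms"
        proof (rule ccontr)
          assume "x' \<notin> prios Ms"
          then have "x' \<in> prios Mq" using x' prB by auto
          then show False using pcs(2) yK xy(3) x' by fastforce
        qed
        then show ?thesis using pcb(1) fK yK f'K f'B x' by fastforce
      next
        case False
        then obtain y' where y': "y' \<in> prios B" "y = \<gamma>s y'" using xy(2) prRs by auto
        have "x' < y'" using xy(3) x' y' shifting_less[OF gs(1)] by simp
        then show ?thesis using x' y' f'B shifting_less[OF gb(1)] by simp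
      qed
    qed
  qed
  define \<zeta>' where "\<zeta>' = (\<lambda>x. if x \<in> Vs then Var x else subst_trm \<theta> (\<zeta> x))"
  define st' where "st' = (\<lambda>q. upd p0 (h,B) \<xi> \<theta> \<gamma>s (st q))"
  have RsK: "psubst \<theta> K \<subseteq> Rs" "kids \<theta> \<xi> \<gamma>s B \<subseteq> Rs" using Rs_eq by auto
  have simnew: "Sim Rs (Us \<union> CVs) Rb (Ub \<union> CVs) (psubst \<theta> E) st' f' \<zeta>' Vs Fb"
    unfolding Sim_def
  proof (intro conjI)
    show "pgoal Rs" "pgoal Rb" by fact+
    show "pgoal_vars Rs \<subseteq> Us \<union> CVs" by (rule vRs)
    show "Us \<union> CVs \<subseteq> Vs" using Sd(4) CVV CVs by auto
    show "finite Vs" by fact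
    show "Ub \<union> CVs = Us \<union> CVs \<union> Fb" using Sd(6) by auto
    show "Fb \<inter> Vs = {}" "finite Fb" by fact+
    show "pgoal_vars Rb \<subseteq> Ub \<union> CVs" by (rule vRb)
    show "strict_mono_on (prios Rs) f'" by (rule smono)
    show "Rb = fimg f' Rs \<union> psubst \<theta> E" by (rule Rbf)
    show "f' ` prios Rs \<inter> prios (psubst \<theta> E) = {}"
    proof -
      have "f' ` prios K \<subseteq> f ` prios Gs" using f'K KG by auto
      then have A1: "f' ` prios K \<inter> prios E = {}" using Sd(12) by blast
      have "f' ` \<gamma>s ` prios B \<subseteq> \<gamma>b ` prios B" using f'B by auto
      moreover have "\<gamma>b ` prios B \<inter> prios E = {}" using pcb EKb prB by fastforce
      ultimately have A2: "f' ` \<gamma>s ` prios B \<inter> prios E = {}" by blast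
      show ?thesis using prRs A1 A2 by (simp add: image_Un Int_Un_distrib2)
    qed
    show "\<forall>x\<in>Vs. \<zeta>' x = Var x" by (simp add: \<zeta>'_def)
    show "\<forall>(a2, q2)\<in>psubst \<theta> E. okst P Rs (st' q2) \<and> subst_atom \<zeta>' a2 = ghost Rs (st' q2) \<and>
            (\<forall>p\<in>msp Msf (st' q2). f' p < q2)"
    proof (intro ballI, clarify)
      fix a2 q2 assume "(a2,q2) \<in> psubst \<theta> E"
      then obtain a3 where a3: "(a3,q2) \<in> E" "a2 = subst_atom \<theta> a3" by (auto simp: mem_psubst)
      have o3: "okst P Gs (st q2)" "subst_atom \<zeta> a3 = ghost Gs (st q2)" "\<forall>p\<in>msp Msf (st q2). f p < q2"
        using Sd(13)[OF a3(1)] by auto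
      have ok': "okst P Rs (st' q2)"
        unfolding st'_def by (rule upd_ok[OF w(1,4,5) pRs RsK cP unif o3(1)])
      have "subst_atom \<zeta>' a2 = subst_atom \<theta> (subst_atom \<zeta> a3)"
        unfolding a3(2) \<zeta>'_def by (rule subst_vars_fix_atom[OF svV]) (use Sd(14) in blast)
      also have "\<dots> = ghost Rs (st' q2)"
        unfolding st'_def o3(2) by (rule upd_ghost[OF w(1,4,5) pRs RsK(1) unif o3(1), symmetric])
      finally have gh: "subst_atom \<zeta>' a2 = ghost Rs (st' q2)" .
      have q2Kb: "q2 \<in> prios Kb" using a3(1) EKb prios_mem by blast
      have ms: "\<forall>p\<in>msp Msf (st' q2). f' p < q2"
      proof
        fix p assume p: "p \<in> msp Msf (st' q2)"
        then have "p \<in> (msp Msf (st q2) - {p0}) \<union> \<gamma>s ` prios Ms"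
          using upd_msp[of p0 "(h,B)" \<xi> \<theta> \<gamma>s "st q2"] by (auto simp: st'_def Ms_def)
        then show "f' p < q2"
        proof
          assume p1: "p \<in> msp Msf (st q2) - {p0}"
          then have "p \<in> prios K" using msp_sub[OF o3(1)] w(4) by auto
          then show ?thesis using f'K o3(3) p1 by auto
        next
          assume "p \<in> \<gamma>s ` prios Ms"
          then obtain p' where p': "p' \<in> prios Ms" "p = \<gamma>s p'" by blast
          then have "f' p = \<gamma>b p'" using f'B prB by auto
          then show ?thesis using pcb(1) p' q2Kb by auto
        qed
      qed
      show "okst P Rs (st' q2) \<and> subst_atom \<zeta>' a2 = ghost Rs (st' q2) \<and> (\<forall>p\<in>msp Msf (st' q2). f' p < q2)"
        using ok' gh ms by blast
    qed
  qed
  show ?thesis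
    apply (rule exI[of _ "(Gb,(h,B),\<xi>,\<theta>,Rb)"], rule exI[of _ "psubst \<theta> E"], rule exI[of _ st'],
        rule exI[of _ f'], rule exI[of _ \<zeta>'])
    using bSQ bst simnew s c
    by (simp add: step_goal_def step_clause_def step_ren_def step_res_def CVs_def)
qed

end



lemma fimg_id[simp]: "fimg id G = G"
  by (auto simp: fimg_def)

lemma finite_clause_vars_rename: "is_clause c \<Longrightarrow> finite (clause_vars (rename_clause \<xi> c))"
  by (cases c) (auto simp: clause_vars_def rename_clause_def is_clause_def pgoal_def psubst_def intro!: finite_pgoal_vars)

lemma finite_futvars: "pderiv_aux S P U G ss R \<Longrightarrow> program P \<Longrightarrow> finite (futvars ss)"
proof (induction ss arbitrary: U G)
  case Nil then show ?case by (simp add: futvars_def)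
next
  case (Cons s ss)
  then have "step_clause s \<in> P" by simp
  then have "is_clause (step_clause s)" using Cons.prems(2) by (auto simp: program_def)
  then have "finite (clause_vars (rename_clause (step_ren s) (step_clause s)))" by (rule finite_clause_vars_rename)
  moreover have "finite (futvars ss)" using Cons by auto
  ultimately show ?case by (simp add: futvars_def)
qed

lemma pcat_union: "pcat_ok Gs \<Longrightarrow> pgoal (\<Union>(set Gs))"
proof (induction Gs)
  case Nil then show ?case by (simp add: pgoal_def)
next
  case (Cons G Gs)
  then have h: "pgoal G" "\<forall>H\<in>set Gs. prio_less G H" "pcat_ok Gs" by (auto simp: pcat_ok_def)
  have "prios G \<inter> prios (\<Union>(set Gs)) = {}"
    using h(2) by (force simp: prio_less_def prios_def)
  then show ?case using Cons.IH h by (simp add: pgoal_Un)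
qed

lemma choice2:
  assumes "\<And>h B. is_clause (h,B) \<Longrightarrow> \<exists>Ms Mq. R h B Ms Mq"
  shows "\<exists>Mf Mg. \<forall>h B. is_clause (h,B) \<longrightarrow> R h B (Mf (h,B)) (Mg (h,B))"
proof -
  define F where "F = (\<lambda>c. SOME MM. R (fst c) (snd c) (fst MM) (snd MM))"
  have "R h B (fst (F (h,B))) (snd (F (h,B)))" if "is_clause (h,B)" for h B
  proof -
    from assms[OF that] obtain Ms Mq where "R h B Ms Mq" by blast
    then have "\<exists>MM. R h B (fst MM) (snd MM)" by (intro exI[of _ "(Ms,Mq)"]) simp
    from someI_ex[OF this] show ?thesis by (simp only: F_def fst_conv snd_conv)
  qed
  then show ?thesis by (intro exI[of _ "\<lambda>c. fst (F c)"] exI[of _ "\<lambda>c. snd (F c)"]) blast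
qed

context sqctx
begin

lemma sim_main:
  "pderiv_aux SQ P Us Gs ss Q \<Longrightarrow> Sim Gs Us Gb Ub E st f \<zeta> Vs Fb \<Longrightarrow> futvars ss \<subseteq> Vs \<Longrightarrow>
   \<exists>ss' R. pderiv_aux SQ P Ub Gb ss' R \<and> subseq (template ss) (template ss') \<and> card Q \<le> card R"
proof (induction ss arbitrary: Us Gs Gb Ub E st f \<zeta> Fb)
  case Nil
  note Sd = SimD[OF Nil.prems(2)]
  have Q: "Q = Gs" using Nil.prems(1) by simp
  have "card Gs = card (fimg f Gs)"
    using card_fimg[OF Sd(1) strict_mono_on_imp_inj_on[OF Sd(10)]] by simp
  also have "\<dots> \<le> card Gb" using Sd(2,11) by (intro card_mono) (auto simp: pgoal_def)
  finally show ?case using Q by (intro exI[of _ "[]"] exI[of _ Gb]) (simp add: template_def)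
next
  case (Cons s ss)
  define CV where "CV = clause_vars (rename_clause (step_ren s) (step_clause s))"
  have sp: "s \<in> SQ" "is_step s" "step_goal s = Gs" "step_clause s \<in> P" "CV \<inter> Us = {}"
    "pderiv_aux SQ P (Us \<union> CV) (step_res s) ss Q"
    using Cons.prems(1) by (auto simp: CV_def)
  have CVV: "CV \<subseteq> Vs" "futvars ss \<subseteq> Vs" using Cons.prems(3) by (auto simp: futvars_def CV_def)
  have Gsne: "Gs \<noteq> {}"
  proof -
    obtain G0 c \<xi> \<theta> R where "s = (G0,c,\<xi>,\<theta>,R)" by (cases s) auto
    with sp(2,3) show ?thesis by (cases c) (auto simp: is_step_def step_goal_def)
  qed
  have "\<forall>Gb Ub E st \<zeta> Fb. wsum E st = n \<longrightarrow> Sim Gs Us Gb Ub E st f \<zeta> Vs Fb \<longrightarrow>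
     (\<exists>ss' R. pderiv_aux SQ P Ub Gb ss' R \<and> subseq (template (s # ss)) (template ss') \<and> card Q \<le> card R)" for n
  proof (induction n rule: less_induct)
    case (less n)
    show ?case
    proof (intro allI impI)
      fix Gb Ub E st \<zeta> Fb assume wn: "wsum E st = n" and S: "Sim Gs Us Gb Ub E st f \<zeta> Vs Fb"
      note Sd = SimD[OF S]
      have fin: "finite (prios Gb)" using Sd(2) by (auto simp: pgoal_def prios_def)
      have ne: "prios Gb \<noteq> {}" using Gsne Sd(11) by (auto simp: prios_def fimg_def)
      define qm where "qm = Min (prios Gb)"
      have qm: "qm \<in> prios Gb" "\<forall>q'\<in>prios Gb. qm \<le> q'" using fin ne by (auto simp: qm_def)
      obtain am where am: "(am,qm) \<in> Gb" using qm(1) by (rule prios_memE)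
      show "\<exists>ss' R. pderiv_aux SQ P Ub Gb ss' R \<and> subseq (template (s # ss)) (template ss') \<and> card Q \<le> card R"
      proof (cases "(am,qm) \<in> E")
        case True
        have front: "\<forall>q'\<in>prios Gb. q' \<noteq> qm \<longrightarrow> qm < q'" using qm(2) by force
        from extra_step[OF S True front] obtain s' Ub' Gb' E' st' \<zeta>' Fb' where
          e: "s' \<in> SQ" "is_step s'" "step_goal s' = Gb" "step_clause s' \<in> P"
          "clause_vars (rename_clause (step_ren s') (step_clause s')) \<inter> Ub = {}"
          "Ub' = Ub \<union> clause_vars (rename_clause (step_ren s') (step_clause s'))" "step_res s' = Gb'"
          "Sim Gs Us Gb' Ub' E' st' f \<zeta>' Vs Fb'" "wsum E' st' < wsum E st"
          by blast
        from less.IH[of "wsum E' st'"] e(8,9) wn obtain ss'' R where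
          r: "pderiv_aux SQ P Ub' Gb' ss'' R" "subseq (template (s # ss)) (template ss'')" "card Q \<le> card R"
          by blast
        have "pderiv_aux SQ P Ub Gb (s' # ss'') R" using e r(1) by simp
        moreover have "subseq (template (s # ss)) (template (s' # ss''))"
          using list_emb_Cons[OF r(2), of "step_clause s'"] by (simp add: template_def)
        ultimately show ?thesis using r(3) by blast
      next
        case False
        have qmE: "qm \<notin> prios E"
        proof
          assume "qm \<in> prios E"
          then obtain a' where a': "(a',qm) \<in> E" by (rule prios_memE)
          then have "(a',qm) \<in> Gb" using Sd(11) by auto
          then have "a' = am" using pgoal_unique[OF Sd(2) am] by simp
          with a' False show False by simp
        qed
        then obtain y where y: "y \<in> prios Gs" "f y = qm" using qm(1) Sd(11) by auto
        have Emin: "\<forall>x\<in>prios E. \<exists>y\<in>prios Gs. f y < x"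
        proof
          fix x assume x: "x \<in> prios E"
          then have "x \<in> prios Gb" using Sd(11) by auto
          then have "qm \<le> x" using qm(2) by blast
          moreover have "x \<noteq> qm" using x qmE by blast
          ultimately show "\<exists>y\<in>prios Gs. f y < x" using y by force
        qed
        from small_step[OF S sp(1-4) sp(5)[unfolded CV_def] CVV(1)[unfolded CV_def] Emin]
        obtain s' E' st' f' \<zeta>' where e: "s' \<in> SQ" "is_step s'" "step_goal s' = Gb"
          "step_clause s' = step_clause s" "step_ren s' = step_ren s"
          "Sim (step_res s) (Us \<union> CV) (step_res s') (Ub \<union> CV) E' st' f' \<zeta>' Vs Fb"
          unfolding CV_def by blast
        from Cons.IH[OF sp(6) e(6) CVV(2)] obtain ss'' R where
          r: "pderiv_aux SQ P (Ub \<union> CV) (step_res s') ss'' R" "subseq (template ss) (template ss'')"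
             "card Q \<le> card R" by blast
        have CVUb: "CV \<inter> Ub = {}" using sp(5) CVV(1) Sd(6,7) by blast
        have "pderiv_aux SQ P Ub Gb (s' # ss'') R"
          using e(1-5) sp(4) CVUb r(1) by (simp add: CV_def)
        moreover have "subseq (template (s # ss)) (template (s' # ss''))"
          using r(2) e(4) by (simp add: template_def)
        ultimately show ?thesis using r(3) by blast
      qed
    qed
  qed
  then show ?case using Cons.prems(2) by blast
qed

end

theorem theoremt4p3p1:
  fixes P :: "('f,'v) clause set" and SQ :: "('f,'v) step set"
    and A B C D Q :: "('f,'v) pgoal" and \<pi> :: "rat \<Rightarrow> rat"
    and ss :: "('f,'v) step list"
  assumes "infinite (UNIV :: 'v set)"
    and "program P"
    and "stack_queue SQ"
    and "shifting \<pi>"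
    and "pcat_ok [A, B, C, D]"
    and "pcat_ok [A, B, C, shift \<pi> B, D]"
    and "pderiv SQ P (A \<union> B \<union> C \<union> D) ss Q"
  shows "\<exists>ss' R. pderiv SQ P (A \<union> B \<union> C \<union> shift \<pi> B \<union> D) ss' R \<and>
           subseq (template ss) (template ss') \<and> card Q \<le> card R"
proof -
  have cs: "complete_steps SQ" using assms(3) by (simp add: stack_queue_def)
  define R0 where "R0 = (\<lambda>h B Ms Mq. pcat_ok [Ms, Mq] \<and> B = Ms \<union> Mq \<and>
           (\<forall>G \<xi> \<mu> R. (G, (h, B), \<xi>, \<mu>, R) \<in> SQ \<longrightarrow>
              (\<exists>a p K \<gamma>. G = insert (a, p) K \<and> (a, p) \<notin> K \<and> (\<forall>q\<in>prios K. p < q) \<and>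
                 shifting \<gamma> \<and>
                 pcat_ok [shift \<gamma> (psubst \<xi> Ms), K, shift \<gamma> (psubst \<xi> Mq)] \<and>
                 R = psubst \<mu> (shift \<gamma> (psubst \<xi> Ms) \<union> K \<union> shift \<gamma> (psubst \<xi> Mq)))))"
  have ex: "\<exists>Ms Mq. R0 h B Ms Mq" if "is_clause (h,B)" for h B
    using assms(3) that unfolding stack_queue_def R0_def by blast
  have "\<exists>Mf Mg. \<forall>h B. is_clause (h,B) \<longrightarrow> R0 h B (Mf (h,B)) (Mg (h,B))"
    apply (rule choice2[of R0])
    apply (erule ex)
    done
  then obtain Mf Mg where MM: "\<forall>h B. is_clause (h,B) \<longrightarrow> R0 h B (Mf (h,B)) (Mg (h,B))"
    by blast
  have MM': "is_clause (h,B) \<Longrightarrow> R0 h B (Mf (h,B)) (Mg (h,B))" for h B using MM by blast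
  interpret sqctx P SQ Mf Mg
    apply unfold_locales
       apply (rule assms(1))
      apply (rule assms(2))
     apply (rule cs)
    apply (drule MM')
    apply (unfold R0_def)
    apply assumption
    done
  define Gs where "Gs = A \<union> B \<union> C \<union> D"
  define Gb where "Gb = A \<union> B \<union> C \<union> shift \<pi> B \<union> D"
  define Us where "Us = pgoal_vars Gs"
  define Vs where "Vs = Us \<union> futvars ss"
  have der: "pderiv_aux SQ P Us Gs ss Q" using assms(7) by (simp add: pderiv_def Us_def Gs_def)
  have pGs: "pgoal Gs" using pcat_union[OF assms(5)] by (simp add: Gs_def Un_assoc)
  have pGb: "pgoal Gb" using pcat_union[OF assms(6)] by (simp add: Gb_def Un_assoc)
  have vGb: "pgoal_vars Gb = Us" by (auto simp: Gb_def Gs_def Us_def)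
  have fV: "finite Vs"
  proof -
    have "finite Us" using pGs by (simp add: Us_def pgoal_def finite_pgoal_vars)
    moreover have "finite (futvars ss)" using finite_futvars[OF der assms(2)] .
    ultimately show ?thesis by (simp add: Vs_def)
  qed
  have pl: "prio_less A (shift \<pi> B)" "prio_less B (shift \<pi> B)" "prio_less C (shift \<pi> B)" "prio_less (shift \<pi> B) D"
    using assms(6) by (auto simp: pcat_ok_def)
  have disj: "prios Gs \<inter> prios (shift \<pi> B) = {}"
    using pl unfolding prio_less_def Gs_def by force
  have "Sim Gs Us Gb Us (shift \<pi> B) (\<lambda>q. Pres (inv \<pi> q)) id Var Vs {}"
    unfolding Sim_def
  proof (intro conjI)
    show "pgoal Gs" "pgoal Gb" by fact+
    show "pgoal_vars Gs \<subseteq> Us" "Us \<subseteq> Vs" "finite Vs" "Us = Us \<union> {}" "{} \<inter> Vs = {}" "finite {}"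
      using fV by (auto simp: Us_def Vs_def)
    show "pgoal_vars Gb \<subseteq> Us" using vGb by simp
    show "strict_mono_on (prios Gs) id" by (simp add: strict_mono_on_def)
    show "Gb = fimg id Gs \<union> shift \<pi> B" by (auto simp: Gb_def Gs_def)
    show "id ` prios Gs \<inter> prios (shift \<pi> B) = {}" using disj by simp
    show "\<forall>x\<in>Vs. Var x = Var x" by simp
    show "\<forall>(a, q)\<in>shift \<pi> B. okst P Gs (Pres (inv \<pi> q)) \<and> subst_atom Var a = ghost Gs (Pres (inv \<pi> q)) \<and>
            (\<forall>p\<in>msp Mf (Pres (inv \<pi> q)). id p < q)"
    proof (intro ballI, clarify)
      fix a q assume "(a,q) \<in> shift \<pi> B"
      then obtain p where p: "(a,p) \<in> B" "q = \<pi> p" by (auto simp: mem_shift)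
      have ip: "inv \<pi> q = p" using p(2) shifting_inv[OF assms(4)] by simp
      have aG: "(a,p) \<in> Gs" using p(1) by (simp add: Gs_def)
      have "p < q" using pl(2) p prios_mem[OF p(1)] prios_mem[of a q "shift \<pi> B"]
        by (force simp: prio_less_def mem_shift)
      then show "okst P Gs (Pres (inv \<pi> q)) \<and> subst_atom Var a = ghost Gs (Pres (inv \<pi> q)) \<and>
            (\<forall>p\<in>msp Mf (Pres (inv \<pi> q)). id p < q)"
        using ip aG ghost_Pres[OF pGs aG] prios_mem[OF aG] by simp
    qed
  qed
  moreover have "futvars ss \<subseteq> Vs" by (simp add: Vs_def)
  ultimately obtain ss' R where "pderiv_aux SQ P Us Gb ss' R" "subseq (template ss) (template ss')" "card Q \<le> card R"
    using sim_main[OF der] by blast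
  then show ?thesis using vGb by (auto simp: pderiv_def Gb_def)
qed


end
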